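(* Let $E$ be a directed graph, $R$ a unital ring, $X\subseteq\mathrm{Reg}(E)$, $B=M(G,I)$ a Brandt groupoid, $S=B\cup\{0\}$ the associated Brandt semigroup, and $w$ a weight mapping. Then $C_R^X(E)=\bigoplus_{s\in S}(C_R^X(E))_s$ is an $S$-graded ring inducing $S$ which admits an anti-graded involution. In particular $L_R(E)=C_R^{\mathrm{Reg}(E)}(E)$ is an $S$-graded ring with an anti-graded involution.
   Context: Directed graph $E=(E^0,E^1,\mathrm{r},\mathrm{s})$, paths $E^*$ (including vertices as length-$0$ paths), regular vertices $\mathrm{Reg}(E)$ (vertices $v$ with $\mathrm{s}^{-1}(v)$ nonempty and finite). For unital $R$ and $X\subseteq\mathrm{Reg}(E)$, the Cohn path algebra $C_R^X(E)$ is the $R$-algebra generated by $E^0$, $E^1$, $\{\alpha^*:\alpha\in E^1\}$ (with $R$ commuting with generators) subject to $vv'=\delta_{v,v'}v$; $\mathrm{s}(\alpha)\alpha=\alpha\mathrm{r}(\alpha)=\alpha$, $\mathrm{r}(\alpha)\alpha^*=\alpha^*\mathrm{s}(\alpha)=\alpha^*$; $\alpha^*\alpha'=\delta_{\alpha,\alpha'}\mathrm{r}(\alpha)$; $\sum_{\mathrm{s}(\alpha)=v}\alpha\alpha^*=v$ for $v\in X$; $L_R(E)=C_R^{\mathrm{Reg}(E)}(E)$. For $\mu=\alpha_1\cdots\alpha_k$, $\mu^*=\alpha_k^*\cdots\alpha_1^*$, $v^*=v$. Brandt groupoid: for a group $G$ and a set $I$, $M(G,I)=I\times G\times I$ with partial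 product $(i,g,j)(k,h,l)=(i,gh,l)$ if $j=k$, undefined otherwise. $S=B\cup\{0\}$, undefined products set to $0$, $0$ absorbing; $I(B)$ denotes the idempotents of $B$ (elements $(i,1_G,i)$); $(i,g,j)^{-1}=(j,g^{-1},i)$, $0^{-1}=0$. Weight mapping: a map $w$ with $w(E^0)\subseteq I(B)$, $w(E^1)\subseteq B$, $w(\alpha^* )=w(\alpha)^{-1}$, and $w(\mathrm{s}(\alpha))w(\alpha)=w(\alpha)=w(\alpha)w(\mathrm{r}(\alpha))$ for all $\alpha\in E^1$; extended multiplicatively: $w(\alpha_1\cdots\alpha_k)=w(\alpha_1)\cdots w(\alpha_k)$, $w(\mu\eta^* )=w(\mu)w(\eta)^{-1}$. For $s\in B$, $(C_R^X(E))_s$ is the $R$-linear span of monomials $\mu\eta^*$ ($\mu,\eta\in E^*$, $\mathrm{r}(\mu)=\mathrm{r}(\eta)$) with $w(\mu\eta^* )=s$; $(C_R^X(E))_0=\{0\}$. $S$-graded ring inducing $S$: $R'=\bigoplus_{s\in S}R'_s$ (direct sum of additive subgroups) with $R'_sR'_t\subseteq R'_{st}$ whenever $st$ is defined and $R'_sR'_t\ne0$ only if $st$ is defined (here in $S$ with zero, $R'_0=0$). An anti-graded involution is a map $^*:R'\to R'$ with $(x^* )^*=x$ for all $x$ and $(R'_s)^*=R'_{s^{-1}}$ for all $s\in S$. *)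

theory Defs
  imports "HOL-Algebra.QuotRing" "Graph_Theory.Digraph"
begin

text \<open>Elements of the Brandt groupoid B = M(G,I) are triples (i,g,j).  The Brandt
  semigroup S = B \<union> {0} is modelled by the option type: Some (i,g,j) is an element
  of B and None is the zero 0.\<close>

definition brandt_groupoid :: "('a, 'b) monoid_scheme \<Rightarrow> 'i set \<Rightarrow> ('i \<times> 'a \<times> 'i) set" where
  "brandt_groupoid G I = I \<times> carrier G \<times> I"

definition brandt_semigroup :: "('a, 'b) monoid_scheme \<Rightarrow> 'i set \<Rightarrow> ('i \<times> 'a \<times> 'i) option set" where
  "brandt_semigroup G I = insert None (Some ` brandt_groupoid G I)"

definition brandt_idempotents :: "('a, 'b) monoid_scheme \<Rightarrow> 'i set \<Rightarrow> ('i \<times> 'a \<times> 'i) set" where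
  "brandt_idempotents G I = {(i, \<one>\<^bsub>G\<^esub>, i) | i. i \<in> I}"

fun brandt_mult :: "('a, 'b) monoid_scheme \<Rightarrow> ('i \<times> 'a \<times> 'i) option \<Rightarrow> ('i \<times> 'a \<times> 'i) option \<Rightarrow> ('i \<times> 'a \<times> 'i) option" where
  "brandt_mult G (Some (i, g, j)) (Some (k, h, l)) =
     (if j = k then Some (i, g \<otimes>\<^bsub>G\<^esub> h, l) else None)"
| "brandt_mult G _ _ = None"

fun brandt_inv :: "('a, 'b) monoid_scheme \<Rightarrow> ('i \<times> 'a \<times> 'i) option \<Rightarrow> ('i \<times> 'a \<times> 'i) option" where
  "brandt_inv G (Some (i, g, j)) = Some (j, inv\<^bsub>G\<^esub> g, i)"
| "brandt_inv G None = None"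

text \<open>E = (E^0, E^1, r, s) is a pre_digraph with verts = E^0, arcs = E^1,
  tail = s (source) and head = r (range).\<close>

definition regular_vertices :: "('v, 'e) pre_digraph \<Rightarrow> 'v set" where
  "regular_vertices E = {v \<in> verts E. out_arcs E v \<noteq> {} \<and> finite (out_arcs E v)}"

text \<open>A path is represented as a pair (v, es): a vertex v together with a list of edges
  es = [a1,...,ak] with s(a1) = v and r(ai) = s(a(i+1)).  The pair (v, []) is the vertex v
  viewed as a path of length 0; a path of positive length is determined by its edges.\<close>

fun cohn_edge_chain :: "('v, 'e) pre_digraph \<Rightarrow> 'v \<Rightarrow> 'e list \<Rightarrow> bool" where
  "cohn_edge_chain E v [] = True"
| "cohn_edge_chain E v (e # es) = (e \<in> arcs E \<and> tail E e = v \<and> cohn_edge_chain E (head E e) es)"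

definition cohn_is_path :: "('v, 'e) pre_digraph \<Rightarrow> 'v \<times> 'e list \<Rightarrow> bool" where
  "cohn_is_path E p = (fst p \<in> verts E \<and> cohn_edge_chain E (fst p) (snd p))"

definition cohn_path_range :: "('v, 'e) pre_digraph \<Rightarrow> 'v \<times> 'e list \<Rightarrow> 'v" where
  "cohn_path_range E p = (if snd p = [] then fst p else head E (last (snd p)))"

text \<open>Generators: vertices v, edges \<alpha> and ghost edges \<alpha>*.\<close>
datatype ('v, 'e) cohn_gen = GV 'v | GE 'e | GS 'e

definition cohn_gens :: "('v, 'e) pre_digraph \<Rightarrow> ('v, 'e) cohn_gen set" where
  "cohn_gens E = GV ` verts E \<union> GE ` arcs E \<union> GS ` arcs E"

text \<open>The free unital R-algebra on a set of generators Gs (R a unital, not necessarily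
  commutative ring, commuting with the generators): finitely supported R-valued
  functions on words over Gs, with concatenation-convolution product.\<close>
definition free_algebra :: "'g set \<Rightarrow> ('g list \<Rightarrow> 'r::ring_1) ring" where
  "free_algebra Gs =
     \<lparr>carrier = {f. finite {w. f w \<noteq> 0} \<and> (\<forall>w. f w \<noteq> 0 \<longrightarrow> set w \<subseteq> Gs)},
      mult = (\<lambda>f g w. \<Sum>i\<le>length w. f (take i w) * g (drop i w)),
      one = (\<lambda>w. if w = [] then 1 else 0),
      zero = (\<lambda>w. 0),
      add = (\<lambda>f g w. f w + g w)\<rparr>"

definition word_elem :: "'g list \<Rightarrow> ('g list \<Rightarrow> 'r::ring_1)" where
  "word_elem u = (\<lambda>w. if w = u then 1 else 0)"

definition cohn_relations :: "('v, 'e) pre_digraph \<Rightarrow> 'v set \<Rightarrow> (('v, 'e) cohn_gen list \<Rightarrow> 'r::ring_1) set" where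
  "cohn_relations E X =
     {(\<lambda>w. word_elem [GV v, GV v'] w - (if v = v' then word_elem [GV v] w else 0)) | v v'.
        v \<in> verts E \<and> v' \<in> verts E}
   \<union> {(\<lambda>w. word_elem [GV (tail E a), GE a] w - word_elem [GE a] w) | a. a \<in> arcs E}
   \<union> {(\<lambda>w. word_elem [GE a, GV (head E a)] w - word_elem [GE a] w) | a. a \<in> arcs E}
   \<union> {(\<lambda>w. word_elem [GV (head E a), GS a] w - word_elem [GS a] w) | a. a \<in> arcs E}
   \<union> {(\<lambda>w. word_elem [GS a, GV (tail E a)] w - word_elem [GS a] w) | a. a \<in> arcs E}
   \<union> {(\<lambda>w. word_elem [GS a, GE a'] w - (if a = a' then word_elem [GV (head E a)] w else 0)) | a a'.
        a \<in> arcs E \<and> a' \<in> arcs E}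
   \<union> {(\<lambda>w. (\<Sum>a\<in>out_arcs E v. word_elem [GE a, GS a] w) - word_elem [GV v] w) | v. v \<in> X}"

definition cohn_free :: "('v, 'e) pre_digraph \<Rightarrow> (('v, 'e) cohn_gen list \<Rightarrow> 'r::ring_1) ring" where
  "cohn_free E = free_algebra (cohn_gens E)"

definition cohn_ideal :: "('v, 'e) pre_digraph \<Rightarrow> 'v set \<Rightarrow> (('v, 'e) cohn_gen list \<Rightarrow> 'r::ring_1) set" where
  "cohn_ideal E X = genideal (cohn_free E) (cohn_relations E X)"

definition cohn_class :: "('v, 'e) pre_digraph \<Rightarrow> 'v set \<Rightarrow> (('v, 'e) cohn_gen list \<Rightarrow> 'r::ring_1) \<Rightarrow> (('v, 'e) cohn_gen list \<Rightarrow> 'r) set" where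
  "cohn_class E X f = cohn_ideal E X +>\<^bsub>cohn_free E\<^esub> f"

text \<open>C_R^X(E) is the (non-unital) R-algebra presented by the generators and relations.
  It is realised as the image, in the quotient of the free unital algebra by the ideal
  generated by the relations, of the elements without constant term (the non-unital free
  algebra).\<close>
definition cohn_path_algebra :: "('v, 'e) pre_digraph \<Rightarrow> 'v set \<Rightarrow> (('v, 'e) cohn_gen list \<Rightarrow> 'r::ring_1) set ring" where
  "cohn_path_algebra E X =
     (cohn_free E Quot cohn_ideal E X)
       \<lparr>carrier := cohn_class E X ` {f \<in> carrier (cohn_free E). f [] = 0}\<rparr>"

definition leavitt_path_algebra :: "('v, 'e) pre_digraph \<Rightarrow> (('v, 'e) cohn_gen list \<Rightarrow> 'r::ring_1) set ring" where
  "leavitt_path_algebra E = cohn_path_algebra E (regular_vertices E)"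

text \<open>A weight mapping is given by its values wv on vertices and we on edges;
  w(\<alpha>*) = w(\<alpha>)^{-1} is built into the extension below.\<close>
definition weight_mapping ::
  "('v, 'e) pre_digraph \<Rightarrow> ('a, 'b) monoid_scheme \<Rightarrow> 'i set \<Rightarrow> ('v \<Rightarrow> 'i \<times> 'a \<times> 'i) \<Rightarrow> ('e \<Rightarrow> 'i \<times> 'a \<times> 'i) \<Rightarrow> bool" where
  "weight_mapping E G I wv we \<longleftrightarrow>
     (\<forall>v\<in>verts E. wv v \<in> brandt_idempotents G I) \<and>
     (\<forall>a\<in>arcs E. we a \<in> brandt_groupoid G I) \<and>
     (\<forall>a\<in>arcs E. brandt_mult G (Some (wv (tail E a))) (Some (we a)) = Some (we a)
                \<and> brandt_mult G (Some (we a)) (Some (wv (head E a))) = Some (we a))"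

definition path_weight ::
  "('a, 'b) monoid_scheme \<Rightarrow> ('v \<Rightarrow> 'i \<times> 'a \<times> 'i) \<Rightarrow> ('e \<Rightarrow> 'i \<times> 'a \<times> 'i) \<Rightarrow> 'v \<times> 'e list \<Rightarrow> ('i \<times> 'a \<times> 'i) option" where
  "path_weight G wv we p =
     (if snd p = [] then Some (wv (fst p))
      else foldl (\<lambda>acc a. brandt_mult G acc (Some (we a))) (Some (we (hd (snd p)))) (tl (snd p)))"

definition path_word :: "'v \<times> 'e list \<Rightarrow> ('v, 'e) cohn_gen list" where
  "path_word p = (if snd p = [] then [GV (fst p)] else map GE (snd p))"

definition path_star_word :: "'v \<times> 'e list \<Rightarrow> ('v, 'e) cohn_gen list" where
  "path_star_word p = (if snd p = [] then [GV (fst p)] else map GS (rev (snd p)))"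

definition weighted_monomials ::
  "('v, 'e) pre_digraph \<Rightarrow> ('a, 'b) monoid_scheme \<Rightarrow> ('v \<Rightarrow> 'i \<times> 'a \<times> 'i) \<Rightarrow> ('e \<Rightarrow> 'i \<times> 'a \<times> 'i)
     \<Rightarrow> ('i \<times> 'a \<times> 'i) option \<Rightarrow> ('v, 'e) cohn_gen list set" where
  "weighted_monomials E G wv we s =
     {path_word \<mu> @ path_star_word \<eta> | \<mu> \<eta>.
        cohn_is_path E \<mu> \<and> cohn_is_path E \<eta> \<and> cohn_path_range E \<mu> = cohn_path_range E \<eta> \<and>
        brandt_mult G (path_weight G wv we \<mu>) (brandt_inv G (path_weight G wv we \<eta>)) = s}"

definition cohn_component ::
  "('v, 'e) pre_digraph \<Rightarrow> 'v set \<Rightarrow> ('a, 'b) monoid_scheme \<Rightarrow> ('v \<Rightarrow> 'i \<times> 'a \<times> 'i) \<Rightarrow> ('e \<Rightarrow> 'i \<times> 'a \<times> 'i)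
     \<Rightarrow> ('i \<times> 'a \<times> 'i) option \<Rightarrow> (('v, 'e) cohn_gen list \<Rightarrow> 'r::ring_1) set set" where
  "cohn_component E X G wv we s =
     (if s = None then {\<zero>\<^bsub>cohn_path_algebra E X\<^esub>}
      else cohn_class E X `
        {f \<in> carrier (cohn_free E). \<forall>w. f w \<noteq> 0 \<longrightarrow> w \<in> weighted_monomials E G wv we s})"

definition brandt_graded_ring ::
  "('c, 'd) ring_scheme \<Rightarrow> ('a, 'b) monoid_scheme \<Rightarrow> 'i set \<Rightarrow> (('i \<times> 'a \<times> 'i) option \<Rightarrow> 'c set) \<Rightarrow> bool" where
  "brandt_graded_ring A G I Rs \<longleftrightarrow>
     (\<forall>s\<in>brandt_semigroup G I. subgroup (Rs s) (add_monoid A)) \<and>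
     Rs None = {\<zero>\<^bsub>A\<^esub>} \<and>
     carrier A = {finsum A x T | x T. finite T \<and> T \<subseteq> brandt_semigroup G I \<and> (\<forall>s\<in>T. x s \<in> Rs s)} \<and>
     (\<forall>x T. finite T \<and> T \<subseteq> brandt_semigroup G I \<and> (\<forall>s\<in>T. x s \<in> Rs s) \<and> finsum A x T = \<zero>\<^bsub>A\<^esub>
        \<longrightarrow> (\<forall>s\<in>T. x s = \<zero>\<^bsub>A\<^esub>)) \<and>
     (\<forall>s\<in>brandt_semigroup G I. \<forall>t\<in>brandt_semigroup G I. brandt_mult G s t \<noteq> None \<longrightarrow>
        (\<forall>x\<in>Rs s. \<forall>y\<in>Rs t. x \<otimes>\<^bsub>A\<^esub> y \<in> Rs (brandt_mult G s t))) \<and>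
     (\<forall>s\<in>brandt_semigroup G I. \<forall>t\<in>brandt_semigroup G I. brandt_mult G s t = None \<longrightarrow>
        (\<forall>x\<in>Rs s. \<forall>y\<in>Rs t. x \<otimes>\<^bsub>A\<^esub> y = \<zero>\<^bsub>A\<^esub>))"

definition anti_graded_involution ::
  "('c, 'd) ring_scheme \<Rightarrow> ('a, 'b) monoid_scheme \<Rightarrow> 'i set \<Rightarrow> (('i \<times> 'a \<times> 'i) option \<Rightarrow> 'c set) \<Rightarrow> ('c \<Rightarrow> 'c) \<Rightarrow> bool" where
  "anti_graded_involution A G I Rs star \<longleftrightarrow>
     star \<in> carrier A \<rightarrow> carrier A \<and>
     (\<forall>x\<in>carrier A. star (star x) = x) \<and>
     (\<forall>s\<in>brandt_semigroup G I. star ` Rs s = Rs (brandt_inv G s))"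

end

theory Submission
  imports Defs
begin

section \<open>Free algebra is a ring\<close>

lemma fa_carrier: "f \<in> carrier (free_algebra Gs) \<longleftrightarrow> finite {w. f w \<noteq> 0} \<and> (\<forall>w. f w \<noteq> 0 \<longrightarrow> set w \<subseteq> Gs)"
  by (simp add: free_algebra_def)
lemma fa_mult: "f \<otimes>\<^bsub>free_algebra Gs\<^esub> g = (\<lambda>w. \<Sum>i\<le>length w. f (take i w) * g (drop i w))"
  by (simp add: free_algebra_def)
lemma fa_add: "f \<oplus>\<^bsub>free_algebra Gs\<^esub> g = (\<lambda>w. f w + g w)"
  by (simp add: free_algebra_def)
lemma fa_zero: "\<zero>\<^bsub>free_algebra Gs\<^esub> = (\<lambda>w. 0)"
  by (simp add: free_algebra_def)
lemma fa_one: "\<one>\<^bsub>free_algebra Gs\<^esub> = (\<lambda>w. if w = [] then 1 else 0)"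
  by (simp add: free_algebra_def)

lemma fa_add_closed:
  assumes "f \<in> carrier (free_algebra Gs)" "g \<in> carrier (free_algebra Gs)"
  shows "(\<lambda>w. f w + g w) \<in> carrier (free_algebra Gs)"
proof -
  have "{w. f w + g w \<noteq> 0} \<subseteq> {w. f w \<noteq> 0} \<union> {w. g w \<noteq> 0}" by auto
  then show ?thesis using assms unfolding fa_carrier
    by (metis (mono_tags, lifting) add.right_neutral add_0 finite_Un finite_subset)
qed

lemma fa_neg_closed:
  assumes "f \<in> carrier (free_algebra Gs)"
  shows "(\<lambda>w. - f w) \<in> carrier (free_algebra Gs)"
  using assms unfolding fa_carrier by simp

lemma sum_nonzero_ex: "(\<Sum>i\<in>A. h i) \<noteq> (0::'a::comm_monoid_add) \<Longrightarrow> \<exists>i\<in>A. h i \<noteq> 0"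
  by (meson sum.neutral)

lemma fa_mult_closed:
  assumes "f \<in> carrier (free_algebra Gs)" "g \<in> carrier (free_algebra Gs)"
  shows "(\<lambda>w. \<Sum>i\<le>length w. f (take i w) * g (drop i w)) \<in> carrier (free_algebra Gs)"
proof -
  let ?h = "(\<lambda>w. \<Sum>i\<le>length w. f (take i w) * g (drop i w))"
  have sub: "{w. ?h w \<noteq> 0} \<subseteq> (\<lambda>(u,v). u @ v) ` ({w. f w \<noteq> 0} \<times> {w. g w \<noteq> 0})"
  proof
    fix w assume "w \<in> {w. ?h w \<noteq> 0}"
    then obtain i where "f (take i w) * g (drop i w) \<noteq> 0" using sum_nonzero_ex by force
    then have "f (take i w) \<noteq> 0" "g (drop i w) \<noteq> 0" by auto
    then show "w \<in> (\<lambda>(u,v). u @ v) ` ({w. f w \<noteq> 0} \<times> {w. g w \<noteq> 0})"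
      by (intro image_eqI[of _ _ "(take i w, drop i w)"]) auto
  qed
  have "\<forall>w. ?h w \<noteq> 0 \<longrightarrow> set w \<subseteq> Gs"
  proof (intro allI impI)
    fix w assume "?h w \<noteq> 0"
    then obtain i where "f (take i w) * g (drop i w) \<noteq> 0" using sum_nonzero_ex by force
    then have "f (take i w) \<noteq> 0" "g (drop i w) \<noteq> 0" by auto
    then have "set (take i w) \<subseteq> Gs" "set (drop i w) \<subseteq> Gs" using assms unfolding fa_carrier by auto
    then show "set w \<subseteq> Gs" by (metis append_take_drop_id set_append sup.bounded_iff)
  qed
  moreover have "finite {w. ?h w \<noteq> 0}"
    using sub assms unfolding fa_carrier by (meson finite_SigmaI finite_imageI finite_subset)
  ultimately show ?thesis unfolding fa_carrier by blast
qed

lemma conv_assoc: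
  fixes f g h :: "'g list \<Rightarrow> 'r::ring_1"
  shows "(\<Sum>i\<le>length w. (\<Sum>j\<le>length (take i w). f (take j (take i w)) * g (drop j (take i w))) * h (drop i w))
       = (\<Sum>j\<le>length w. f (take j w) * (\<Sum>k\<le>length (drop j w). g (take k (drop j w)) * h (drop k (drop j w))))"
proof -
  let ?n = "length w"
  have L: "(\<Sum>i\<le>length w. (\<Sum>j\<le>length (take i w). f (take j (take i w)) * g (drop j (take i w))) * h (drop i w))
      = (\<Sum>i\<le>?n. \<Sum>j\<le>i. f (take j w) * g (take (i - j) (drop j w)) * h (drop i w))"
    by (rule sum.cong[OF refl]) (simp add: sum_distrib_right min_absorb1 drop_take)
  have R: "(\<Sum>j\<le>length w. f (take j w) * (\<Sum>k\<le>length (drop j w). g (take k (drop j w)) * h (drop k (drop j w))))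
      = (\<Sum>j\<le>?n. \<Sum>k\<le>?n - j. f (take j w) * g (take k (drop j w)) * h (drop (j + k) w))"
    by (rule sum.cong[OF refl]) (simp add: sum_distrib_left mult.assoc add.commute)
  have "(\<Sum>j\<le>?n. \<Sum>k\<le>?n - j. f (take j w) * g (take k (drop j w)) * h (drop (j + k) w))
      = (\<Sum>(j,k)\<in>{(j,k). j + k \<le> ?n}. f (take j w) * g (take k (drop j w)) * h (drop (j + k) w))"
  proof -
    have e: "{(j,k). j + k \<le> ?n} = Sigma {..?n} (\<lambda>j. {..?n - j})" by auto
    show ?thesis unfolding e by (subst sum.Sigma) auto
  qed
  also have "\<dots> = (\<Sum>i\<le>?n. \<Sum>j\<le>i. f (take j w) * g (take (i - j) (drop j w)) * h (drop (j + (i - j)) w))"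
    by (rule sum.triangle_reindex_eq)
  also have "\<dots> = (\<Sum>i\<le>?n. \<Sum>j\<le>i. f (take j w) * g (take (i - j) (drop j w)) * h (drop i w))"
    by (intro sum.cong refl) auto
  finally show ?thesis using L R by simp
qed

lemma conv_one_left:
  fixes g :: "'g list \<Rightarrow> 'r::ring_1"
  shows "(\<Sum>i\<le>length w. (if take i w = [] then 1 else 0) * g (drop i w)) = g w"
proof -
  have "(\<Sum>i\<le>length w. (if take i w = [] then 1 else 0) * g (drop i w)) = (\<Sum>i\<le>length w. if i = 0 then g w else 0)"
    by (rule sum.cong) auto
  then show ?thesis by simp
qed

lemma conv_one_right:
  fixes f :: "'g list \<Rightarrow> 'r::ring_1"
  shows "(\<Sum>i\<le>length w. f (take i w) * (if drop i w = [] then 1 else 0)) = f w"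
proof -
  have "(\<Sum>i\<le>length w. f (take i w) * (if drop i w = [] then 1 else 0)) = (\<Sum>i\<le>length w. if i = length w then f w else 0)"
    by (rule sum.cong) auto
  then show ?thesis by simp
qed

lemma fa_ring: "ring (free_algebra Gs :: ('g list \<Rightarrow> 'r::ring_1) ring)"
proof (rule ringI)
  show "abelian_group (free_algebra Gs :: ('g list \<Rightarrow> 'r::ring_1) ring)"
  proof (rule abelian_groupI)
    fix x assume "x \<in> carrier (free_algebra Gs :: ('g list \<Rightarrow> 'r::ring_1) ring)"
    then show "\<exists>y\<in>carrier (free_algebra Gs). y \<oplus>\<^bsub>free_algebra Gs\<^esub> x = \<zero>\<^bsub>free_algebra Gs\<^esub>"
      by (intro bexI[of _ "\<lambda>w. - x w"]) (auto simp: fa_add fa_zero fa_neg_closed)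
  qed (simp_all add: fa_add fa_zero fa_add_closed ac_simps, simp add: fa_carrier)
  show "monoid (free_algebra Gs :: ('g list \<Rightarrow> 'r::ring_1) ring)"
  proof (rule monoidI)
    show "\<one>\<^bsub>free_algebra Gs\<^esub> \<in> carrier (free_algebra Gs :: ('g list \<Rightarrow> 'r::ring_1) ring)"
    proof -
      have "{w. (if w = [] then 1 else 0 :: 'r) \<noteq> 0} = {[]}" by auto
      then show ?thesis unfolding fa_one fa_carrier by auto
    qed
  next
    fix x y z :: "'g list \<Rightarrow> 'r"
    show "x \<otimes>\<^bsub>free_algebra Gs\<^esub> y \<otimes>\<^bsub>free_algebra Gs\<^esub> z = x \<otimes>\<^bsub>free_algebra Gs\<^esub> (y \<otimes>\<^bsub>free_algebra Gs\<^esub> z)"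
      unfolding fa_mult by (rule ext) (rule conv_assoc)
  next
    fix x :: "'g list \<Rightarrow> 'r"
    show "\<one>\<^bsub>free_algebra Gs\<^esub> \<otimes>\<^bsub>free_algebra Gs\<^esub> x = x"
      unfolding fa_mult fa_one by (rule ext) (rule conv_one_left)
    show "x \<otimes>\<^bsub>free_algebra Gs\<^esub> \<one>\<^bsub>free_algebra Gs\<^esub> = x"
      unfolding fa_mult fa_one by (rule ext) (rule conv_one_right)
  qed (simp_all add: fa_mult fa_mult_closed)
qed (auto simp: fa_mult fa_add sum.distrib ring_distribs)



definition sc :: "'r::ring_1 \<Rightarrow> 'g list \<Rightarrow> ('g list \<Rightarrow> 'r)" where
  "sc r u = (\<lambda>w. if w = u then r else 0)"

lemma word_elem_sc: "word_elem u = sc 1 u"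
  by (simp add: word_elem_def sc_def)

lemma sc_carrier: "set u \<subseteq> Gs \<Longrightarrow> sc r u \<in> carrier (free_algebra Gs)"
proof -
  assume a: "set u \<subseteq> Gs"
  have "{w. sc r u w \<noteq> 0} \<subseteq> {u}" by (auto simp: sc_def)
  then show ?thesis using a unfolding fa_carrier by (auto simp: sc_def dest: finite_subset)
qed

lemma fa_a_inv:
  assumes "f \<in> carrier (free_algebra Gs :: ('g list \<Rightarrow> 'r::ring_1) ring)"
  shows "\<ominus>\<^bsub>free_algebra Gs\<^esub> f = (\<lambda>w. - f w)"
proof -
  interpret R: ring "free_algebra Gs :: ('g list \<Rightarrow> 'r::ring_1) ring" by (rule fa_ring)
  show ?thesis
    by (rule R.minus_equality) (auto simp: assms fa_neg_closed fa_add fa_zero)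
qed

lemma fa_minus:
  assumes "f \<in> carrier (free_algebra Gs :: ('g list \<Rightarrow> 'r::ring_1) ring)" "g \<in> carrier (free_algebra Gs)"
  shows "f \<ominus>\<^bsub>free_algebra Gs\<^esub> g = (\<lambda>w. f w - g w)"
  using assms by (simp add: a_minus_def fa_a_inv fa_add)

lemma fa_minus_closed:
  assumes "f \<in> carrier (free_algebra Gs :: ('g list \<Rightarrow> 'r::ring_1) ring)" "g \<in> carrier (free_algebra Gs)"
  shows "(\<lambda>w. f w - g w) \<in> carrier (free_algebra Gs)"
  using fa_add_closed[OF assms(1) fa_neg_closed[OF assms(2)]] by simp

lemma sc_mult_left_pt:
  fixes h :: "'g list \<Rightarrow> 'r::ring_1"
  shows "(sc r u \<otimes>\<^bsub>free_algebra Gs\<^esub> h) w = (if take (length u) w = u then r * h (drop (length u) w) else 0)"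
proof -
  have "(\<Sum>i\<le>length w. sc r u (take i w) * h (drop i w))
      = (\<Sum>i\<le>length w. if i = length u then (if take (length u) w = u then r * h (drop (length u) w) else 0) else 0)"
  proof (rule sum.cong[OF refl])
    fix i assume "i \<in> {..length w}"
    then show "sc r u (take i w) * h (drop i w) = (if i = length u then (if take (length u) w = u then r * h (drop (length u) w) else 0) else 0)"
      by (auto simp: sc_def)
  qed
  also have "\<dots> = (if take (length u) w = u then r * h (drop (length u) w) else 0)"
    by (auto simp: sum.delta)
  finally show ?thesis by (simp add: fa_mult)
qed

lemma sc_mult_right_pt:
  fixes h :: "'g list \<Rightarrow> 'r::ring_1"
  shows "(h \<otimes>\<^bsub>free_algebra Gs\<^esub> sc r u) w =
     (if length u \<le> length w \<and> drop (length w - length u) w = u then h (take (length w - length u) w) * r else 0)"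
proof -
  let ?k = "length w - length u"
  have "(\<Sum>i\<le>length w. h (take i w) * sc r u (drop i w))
      = (\<Sum>i\<le>length w. if i = ?k then (if length u \<le> length w \<and> drop ?k w = u then h (take ?k w) * r else 0) else 0)"
  proof (rule sum.cong[OF refl])
    fix i assume "i \<in> {..length w}"
    then show "h (take i w) * sc r u (drop i w) = (if i = ?k then (if length u \<le> length w \<and> drop ?k w = u then h (take ?k w) * r else 0) else 0)"
      by (auto simp: sc_def)
  qed
  also have "\<dots> = (if length u \<le> length w \<and> drop ?k w = u then h (take ?k w) * r else 0)"
    by (auto simp: sum.delta)
  finally show ?thesis by (simp add: fa_mult)
qed

lemma sc_mult_sc: "sc r u \<otimes>\<^bsub>free_algebra Gs\<^esub> sc (s::'r::ring_1) v = sc (r * s) (u @ v)"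
proof (rule ext)
  fix w
  show "(sc r u \<otimes>\<^bsub>free_algebra Gs\<^esub> sc s v) w = sc (r * s) (u @ v) w"
    unfolding sc_mult_left_pt by (auto simp: sc_def) (metis append_take_drop_id)
qed

lemma word_mult: "word_elem u \<otimes>\<^bsub>free_algebra Gs\<^esub> (word_elem v :: 'g list \<Rightarrow> 'r::ring_1) = word_elem (u @ v)"
  by (simp add: word_elem_sc sc_mult_sc)

lemma const_mult_left: "sc r [] \<otimes>\<^bsub>free_algebra Gs\<^esub> (h :: 'g list \<Rightarrow> 'r::ring_1) = (\<lambda>w. r * h w)"
  by (rule ext) (simp add: sc_mult_left_pt)

lemma const_mult_right: "(h :: 'g list \<Rightarrow> 'r::ring_1) \<otimes>\<^bsub>free_algebra Gs\<^esub> sc r [] = (\<lambda>w. h w * r)"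
  by (rule ext) (simp add: sc_mult_right_pt)

lemma fa_finsum_pt:
  assumes "finite T" "F ` T \<subseteq> carrier (free_algebra Gs :: ('g list \<Rightarrow> 'r::ring_1) ring)"
  shows "finsum (free_algebra Gs) F T w = (\<Sum>t\<in>T. F t w)"
  using assms
proof (induction T rule: finite_induct)
  case empty
  interpret R: ring "free_algebra Gs :: ('g list \<Rightarrow> 'r::ring_1) ring" by (rule fa_ring)
  show ?case by (simp add: fa_zero)
next
  case (insert x T)
  interpret R: ring "free_algebra Gs :: ('g list \<Rightarrow> 'r::ring_1) ring" by (rule fa_ring)
  show ?case using insert by (simp add: R.finsum_insert Pi_def image_subset_iff fa_add)
qed

lemma fa_finsum_eq:
  assumes "finite T" "F ` T \<subseteq> carrier (free_algebra Gs :: ('g list \<Rightarrow> 'r::ring_1) ring)"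
  shows "finsum (free_algebra Gs) F T = (\<lambda>w. \<Sum>t\<in>T. F t w)"
  using fa_finsum_pt[OF assms] by auto

lemma fa_decomp:
  assumes "f \<in> carrier (free_algebra Gs :: ('g list \<Rightarrow> 'r::ring_1) ring)"
  shows "f = finsum (free_algebra Gs) (\<lambda>u. sc (f u) u) {w. f w \<noteq> 0}"
proof -
  have fin: "finite {w. f w \<noteq> 0}" using assms by (simp add: fa_carrier)
  have sub: "(\<lambda>u. sc (f u) u) ` {w. f w \<noteq> 0} \<subseteq> carrier (free_algebra Gs)"
    using assms by (auto simp: fa_carrier intro!: sc_carrier)
  show ?thesis
  proof (rule ext)
    fix w
    have "(\<Sum>t\<in>{w. f w \<noteq> 0}. sc (f t) t w) = (\<Sum>t\<in>{w. f w \<noteq> 0}. if t = w then f w else 0)"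
      by (rule sum.cong) (auto simp: sc_def)
    also have "\<dots> = f w" using fin by (simp add: sum.delta')
    finally show "f w = finsum (free_algebra Gs) (\<lambda>u. sc (f u) u) {w. f w \<noteq> 0} w"
      by (simp add: fa_finsum_pt[OF fin sub])
  qed
qed

lemma finsum_in_subset:
  assumes R: "abelian_monoid R" and "finite T" and J: "J \<subseteq> carrier R" "\<zero>\<^bsub>R\<^esub> \<in> J"
    "\<And>a b. a \<in> J \<Longrightarrow> b \<in> J \<Longrightarrow> a \<oplus>\<^bsub>R\<^esub> b \<in> J" and "\<And>t. t \<in> T \<Longrightarrow> F t \<in> J"
  shows "finsum R F T \<in> J"
  using assms(2,6)
proof (induction T rule: finite_induct)
  case empty then show ?case using R J by (simp add: abelian_monoid.finsum_empty)
next
  case (insert x T)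
  have "F \<in> T \<rightarrow> carrier R" "F x \<in> carrier R" using insert J by auto
  then show ?case using insert J
    by (simp add: abelian_monoid.finsum_insert[OF R])
qed

lemma fa_ideal_crit:
  fixes J :: "('g list \<Rightarrow> 'r::ring_1) set"
  assumes sub: "J \<subseteq> carrier (free_algebra Gs)"
    and z: "(\<lambda>w. 0) \<in> J"
    and ad: "\<And>a b. a \<in> J \<Longrightarrow> b \<in> J \<Longrightarrow> (\<lambda>w. a w + b w) \<in> J"
    and ng: "\<And>a. a \<in> J \<Longrightarrow> (\<lambda>w. - a w) \<in> J"
    and lc: "\<And>a r u. a \<in> J \<Longrightarrow> set u \<subseteq> Gs \<Longrightarrow> sc r u \<otimes>\<^bsub>free_algebra Gs\<^esub> a \<in> J"
    and rc: "\<And>a r u. a \<in> J \<Longrightarrow> set u \<subseteq> Gs \<Longrightarrow> a \<otimes>\<^bsub>free_algebra Gs\<^esub> sc r u \<in> J"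
  shows "ideal J (free_algebra Gs)"
proof -
  interpret R: ring "free_algebra Gs :: ('g list \<Rightarrow> 'r::ring_1) ring" by (rule fa_ring)
  have am: "abelian_monoid (free_algebra Gs :: ('g list \<Rightarrow> 'r::ring_1) ring)" by (rule R.abelian_monoid_axioms)
  show ?thesis
  proof (rule idealI[OF fa_ring])
    show "subgroup J (add_monoid (free_algebra Gs))"
    proof (rule R.add.subgroupI)
      show "J \<subseteq> carrier (free_algebra Gs)" using sub by simp
      show "J \<noteq> {}" using z by auto
      fix a b assume a: "a \<in> J" and b: "b \<in> J"
      show "\<ominus>\<^bsub>free_algebra Gs\<^esub> a \<in> J"
        using fa_a_inv[of a Gs] a sub ng by auto
      show "a \<oplus>\<^bsub>free_algebra Gs\<^esub> b \<in> J" using ad[OF a b] by (simp add: fa_add)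
    qed
  next
    fix a x assume a: "a \<in> J" and x: "x \<in> carrier (free_algebra Gs :: ('g list \<Rightarrow> 'r::ring_1) ring)"
    have fin: "finite {w. x w \<noteq> 0}" using x by (simp add: fa_carrier)
    have scs: "(\<lambda>u. sc (x u) u) \<in> {w. x w \<noteq> 0} \<rightarrow> carrier (free_algebra Gs)"
      using x by (auto simp: fa_carrier intro!: sc_carrier)
    have acar: "a \<in> carrier (free_algebra Gs)" using a sub by auto
    have zJ: "\<zero>\<^bsub>free_algebra Gs\<^esub> \<in> J" using z by (simp add: fa_zero)
    have adJ: "\<And>a b. a \<in> J \<Longrightarrow> b \<in> J \<Longrightarrow> a \<oplus>\<^bsub>free_algebra Gs\<^esub> b \<in> J" using ad by (simp add: fa_add)
    have "x \<otimes>\<^bsub>free_algebra Gs\<^esub> a = finsum (free_algebra Gs) (\<lambda>u. sc (x u) u \<otimes>\<^bsub>free_algebra Gs\<^esub> a) {w. x w \<noteq> 0}"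
      using fa_decomp[OF x] R.finsum_ldistr[OF fin acar scs] by simp
    also have "\<dots> \<in> J"
      by (rule finsum_in_subset[OF am fin sub zJ adJ]) (use x a lc in \<open>auto simp: fa_carrier\<close>)
    finally show "x \<otimes>\<^bsub>free_algebra Gs\<^esub> a \<in> J" .
    have "a \<otimes>\<^bsub>free_algebra Gs\<^esub> x = finsum (free_algebra Gs) (\<lambda>u. a \<otimes>\<^bsub>free_algebra Gs\<^esub> sc (x u) u) {w. x w \<noteq> 0}"
      using fa_decomp[OF x] R.finsum_rdistr[OF fin acar scs] by simp
    also have "\<dots> \<in> J"
      by (rule finsum_in_subset[OF am fin sub zJ adJ]) (use x a rc in \<open>auto simp: fa_carrier\<close>)
    finally show "a \<otimes>\<^bsub>free_algebra Gs\<^esub> x \<in> J" .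
  qed
qed



datatype 'x bw = BOne | BZero | BEl 'x

fun bmul :: "('a, 'b) monoid_scheme \<Rightarrow> ('i \<times> 'a \<times> 'i) bw \<Rightarrow> ('i \<times> 'a \<times> 'i) bw \<Rightarrow> ('i \<times> 'a \<times> 'i) bw" where
  "bmul G BOne y = y"
| "bmul G BZero y = BZero"
| "bmul G (BEl x) BOne = BEl x"
| "bmul G (BEl x) BZero = BZero"
| "bmul G (BEl (i, g, j)) (BEl (k, h, l)) = (if j = k then BEl (i, g \<otimes>\<^bsub>G\<^esub> h, l) else BZero)"

fun good :: "('a, 'b) monoid_scheme \<Rightarrow> 'i set \<Rightarrow> ('i \<times> 'a \<times> 'i) bw \<Rightarrow> bool" where
  "good G I (BEl (i, g, j)) = (i \<in> I \<and> g \<in> carrier G \<and> j \<in> I)"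
| "good G I _ = True"

fun binvb :: "('a, 'b) monoid_scheme \<Rightarrow> ('i \<times> 'a \<times> 'i) bw \<Rightarrow> ('i \<times> 'a \<times> 'i) bw" where
  "binvb G (BEl (i, g, j)) = BEl (j, inv\<^bsub>G\<^esub> g, i)"
| "binvb G BOne = BOne"
| "binvb G BZero = BZero"

fun emb :: "('i \<times> 'a \<times> 'i) option \<Rightarrow> ('i \<times> 'a \<times> 'i) bw" where
  "emb (Some x) = BEl x"
| "emb None = BZero"

lemma bmul_BOne_right[simp]: "bmul G x BOne = x"
  by (cases x) auto
lemma bmul_BZero_right[simp]: "bmul G x BZero = BZero"
  by (cases x) auto

lemma good_bmul: "monoid G \<Longrightarrow> good G I x \<Longrightarrow> good G I y \<Longrightarrow> good G I (bmul G x y)"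
  by (cases x; cases y) (auto simp: monoid.m_closed)

lemma bmul_assoc:
  assumes "monoid G" "good G I x" "good G I y" "good G I z"
  shows "bmul G (bmul G x y) z = bmul G x (bmul G y z)"
  using assms by (cases x; cases y; cases z) (auto simp: monoid.m_assoc)

lemma good_binvb: "group G \<Longrightarrow> good G I x \<Longrightarrow> good G I (binvb G x)"
  by (cases x) auto

lemma binvb_binvb: "group G \<Longrightarrow> good G I x \<Longrightarrow> binvb G (binvb G x) = x"
  by (cases x) auto

lemma binvb_bmul:
  assumes "group G" "good G I x" "good G I y"
  shows "binvb G (bmul G x y) = bmul G (binvb G y) (binvb G x)"
  using assms by (cases x; cases y) (auto simp: group.inv_mult_group)

lemma emb_mult: "emb (brandt_mult G s t) = bmul G (emb s) (emb t)"
  by (cases s; cases t) auto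

lemma emb_inv: "emb (brandt_inv G s) = binvb G (emb s)"
  by (cases s) auto

lemma emb_inj: "emb s = emb t \<Longrightarrow> s = t"
  by (cases s; cases t) auto



locale cctx =
  fixes E :: "('v, 'e) pre_digraph" and X :: "'v set" and G :: "('a, 'b) monoid_scheme"
    and I :: "'i set" and wv :: "'v \<Rightarrow> 'i \<times> 'a \<times> 'i" and we :: "'e \<Rightarrow> 'i \<times> 'a \<times> 'i"
  assumes wf: "wf_digraph E" and XV: "X \<subseteq> verts E" and grp: "group G"
    and wm: "weight_mapping E G I wv we"
begin

lemma mon: "monoid G" using grp by (simp add: group.is_monoid)

lemma tail_v: "a \<in> arcs E \<Longrightarrow> tail E a \<in> verts E" using wf by (simp add: wf_digraph.tail_in_verts)
lemma head_v: "a \<in> arcs E \<Longrightarrow> head E a \<in> verts E" using wf by (simp add: wf_digraph.head_in_verts)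

lemma wv_idem: "v \<in> verts E \<Longrightarrow> \<exists>i\<in>I. wv v = (i, \<one>\<^bsub>G\<^esub>, i)"
  using wm by (auto simp: weight_mapping_def brandt_idempotents_def)

lemma we_arc: "a \<in> arcs E \<Longrightarrow> \<exists>i g j. we a = (i, g, j) \<and> i \<in> I \<and> g \<in> carrier G \<and> j \<in> I \<and>
    wv (tail E a) = (i, \<one>\<^bsub>G\<^esub>, i) \<and> wv (head E a) = (j, \<one>\<^bsub>G\<^esub>, j)"
proof -
  assume a: "a \<in> arcs E"
  obtain i g j where we: "we a = (i, g, j)" "i \<in> I" "g \<in> carrier G" "j \<in> I"
    using wm a by (auto simp: weight_mapping_def brandt_groupoid_def)
  obtain k where k: "wv (tail E a) = (k, \<one>\<^bsub>G\<^esub>, k)" using wv_idem[OF tail_v[OF a]] by auto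
  obtain l where l: "wv (head E a) = (l, \<one>\<^bsub>G\<^esub>, l)" using wv_idem[OF head_v[OF a]] by auto
  have c: "brandt_mult G (Some (wv (tail E a))) (Some (we a)) = Some (we a)"
      "brandt_mult G (Some (we a)) (Some (wv (head E a))) = Some (we a)"
    using wm a by (auto simp: weight_mapping_def)
  have "k = i" using c(1) k we by (auto split: if_splits)
  moreover have "l = j" using c(2) l we by (auto split: if_splits)
  ultimately show ?thesis using we k l by auto
qed

definition lw :: "('v, 'e) cohn_gen \<Rightarrow> ('i \<times> 'a \<times> 'i) bw" where
  "lw x = (if x \<in> cohn_gens E then (case x of GV v \<Rightarrow> BEl (wv v) | GE a \<Rightarrow> BEl (we a) | GS a \<Rightarrow> binvb G (BEl (we a))) else BZero)"

definition wt :: "('v, 'e) cohn_gen list \<Rightarrow> ('i \<times> 'a \<times> 'i) bw" where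
  "wt w = foldr (\<lambda>x acc. bmul G (lw x) acc) w BOne"

lemma lw_GV: "v \<in> verts E \<Longrightarrow> lw (GV v) = BEl (wv v)"
  by (simp add: lw_def cohn_gens_def)
lemma lw_GE: "a \<in> arcs E \<Longrightarrow> lw (GE a) = BEl (we a)"
  by (simp add: lw_def cohn_gens_def)
lemma lw_GS: "a \<in> arcs E \<Longrightarrow> lw (GS a) = binvb G (BEl (we a))"
  by (simp add: lw_def cohn_gens_def)

lemma good_lw: "good G I (lw x)"
proof (cases "x \<in> cohn_gens E")
  case True
  then show ?thesis
  proof (cases x)
    case (GV v)
    then have "v \<in> verts E" using True by (auto simp: cohn_gens_def)
    then show ?thesis using GV wv_idem[of v] mon by (auto simp: lw_GV monoid.one_closed)
  next
    case (GE a)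
    then have "a \<in> arcs E" using True by (auto simp: cohn_gens_def)
    then show ?thesis using GE we_arc[of a] by (auto simp: lw_GE)
  next
    case (GS a)
    then have "a \<in> arcs E" using True by (auto simp: cohn_gens_def)
    then show ?thesis using GS we_arc[of a] grp by (auto simp: lw_GS)
  qed
qed (simp add: lw_def)

lemma good_wt: "good G I (wt w)"
  by (induction w) (auto simp: wt_def good_lw intro: good_bmul[OF mon])

lemma wt_Nil[simp]: "wt [] = BOne" by (simp add: wt_def)
lemma wt_Cons: "wt (x # w) = bmul G (lw x) (wt w)" by (simp add: wt_def)

lemma wt_append: "wt (u @ v) = bmul G (wt u) (wt v)"
proof (induction u)
  case (Cons x u)
  then show ?case using bmul_assoc[OF mon good_lw good_wt good_wt] by (simp add: wt_Cons)
qed simp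

lemma wt_single: "wt [x] = lw x" by (simp add: wt_Cons)
lemma wt_two: "wt [x, y] = bmul G (lw x) (lw y)" by (simp add: wt_Cons)

lemma wt_nonempty_not_one: "w \<noteq> [] \<Longrightarrow> set w \<subseteq> cohn_gens E \<Longrightarrow> wt w \<noteq> BOne"
proof (induction w)
  case (Cons x w)
  have "\<exists>y. lw x = BEl y"
  proof -
    have xg: "x \<in> cohn_gens E" using Cons.prems by auto
    show ?thesis
    proof (cases x)
      case (GV v) then show ?thesis by (intro exI[of _ "wv v"]) (use xg in \<open>auto simp: cohn_gens_def lw_GV\<close>)
    next
      case (GE a) then show ?thesis by (intro exI[of _ "we a"]) (use xg in \<open>auto simp: cohn_gens_def lw_GE\<close>)
    next
      case (GS a)
      then have "a \<in> arcs E" using xg by (auto simp: cohn_gens_def)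
      then show ?thesis using GS we_arc[of a] by (auto simp: lw_GS)
    qed
  qed
  then obtain y where y: "lw x = BEl y" by auto
  show ?case
  proof (cases w)
    case Nil then show ?thesis using y by (simp add: wt_Cons)
  next
    case (Cons z zs)
    then have "wt w \<noteq> BOne" using Cons.IH Cons.prems by auto
    then show ?thesis using y by (cases "wt w"; cases y) (auto simp: wt_Cons split: prod.splits if_splits)
  qed
qed simp

lemma gens_GV: "v \<in> verts E \<Longrightarrow> GV v \<in> cohn_gens E" by (simp add: cohn_gens_def)
lemma gens_GE: "a \<in> arcs E \<Longrightarrow> GE a \<in> cohn_gens E" by (simp add: cohn_gens_def)
lemma gens_GS: "a \<in> arcs E \<Longrightarrow> GS a \<in> cohn_gens E" by (simp add: cohn_gens_def)

lemma cf: "cohn_free E = free_algebra (cohn_gens E)" by (simp add: cohn_free_def)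

lemma ring_F: "ring (cohn_free E :: (('v, 'e) cohn_gen list \<Rightarrow> 'r::ring_1) ring)"
  by (simp add: cf fa_ring)

lemma word_carrier: "set u \<subseteq> cohn_gens E \<Longrightarrow> word_elem u \<in> carrier (cohn_free E)"
  by (simp add: cf word_elem_sc sc_carrier)

lemma wdiff_carrier: "set u \<subseteq> cohn_gens E \<Longrightarrow> set u' \<subseteq> cohn_gens E \<Longrightarrow>
    (\<lambda>w. word_elem u w - word_elem u' w) \<in> carrier (cohn_free E)"
  by (simp add: cf fa_minus_closed word_carrier[unfolded cf])

lemma wsum_carrier:
  assumes "\<forall>a\<in>A. set (h a) \<subseteq> cohn_gens E"
  shows "(\<lambda>w. \<Sum>a\<in>A. word_elem (h a) w) \<in> carrier (cohn_free E :: (('v, 'e) cohn_gen list \<Rightarrow> 'r::ring_1) ring)"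
proof (cases "finite A")
  case True
  interpret R: ring "cohn_free E :: (('v, 'e) cohn_gen list \<Rightarrow> 'r::ring_1) ring" by (rule ring_F)
  have s: "(\<lambda>a. word_elem (h a)) ` A \<subseteq> carrier (free_algebra (cohn_gens E) :: (('v, 'e) cohn_gen list \<Rightarrow> 'r::ring_1) ring)"
    using assms by (auto intro!: word_carrier[unfolded cf])
  have "(\<lambda>w. \<Sum>a\<in>A. word_elem (h a) w :: 'r) = finsum (cohn_free E) (\<lambda>a. word_elem (h a)) A"
    using fa_finsum_eq[OF True s] by (simp add: cf)
  also have "\<dots> \<in> carrier (cohn_free E)" using s by (intro R.finsum_closed) (auto simp: cf)
  finally show ?thesis .
next
  case False
  then show ?thesis by (simp add: cf fa_carrier)
qed

lemma rels_carrier: "cohn_relations E X \<subseteq> carrier (cohn_free E :: (('v, 'e) cohn_gen list \<Rightarrow> 'r::ring_1) ring)"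
proof
  fix r :: "('v, 'e) cohn_gen list \<Rightarrow> 'r" assume "r \<in> cohn_relations E X"
  then show "r \<in> carrier (cohn_free E)"
    unfolding cohn_relations_def
  proof (elim UnE CollectE exE conjE)
    fix v v' assume r: "r = (\<lambda>w. word_elem [GV v, GV v'] w - (if v = v' then word_elem [GV v] w else 0))"
      and vv: "v \<in> verts E" "v' \<in> verts E"
    show ?thesis
    proof (cases "v = v'")
      case True then show ?thesis using r vv by (simp add: wdiff_carrier gens_GV)
    next
      case False
      then show ?thesis using r vv word_carrier[of "[GV v, GV v']"] by (simp add: gens_GV)
    qed
  next
    fix v assume r: "r = (\<lambda>w. (\<Sum>a\<in>out_arcs E v. word_elem [GE a, GS a] w) - word_elem [GV v] w)" and v: "v \<in> X"
    have "(\<lambda>w. \<Sum>a\<in>out_arcs E v. word_elem [GE a, GS a] w) \<in> carrier (cohn_free E :: (('v, 'e) cohn_gen list \<Rightarrow> 'r::ring_1) ring)"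
      by (rule wsum_carrier) (auto simp: gens_GE gens_GS)
    moreover have "word_elem [GV v] \<in> carrier (cohn_free E :: (('v, 'e) cohn_gen list \<Rightarrow> 'r::ring_1) ring)"
      using v XV by (intro word_carrier) (auto simp: gens_GV)
    ultimately show ?thesis using r fa_minus_closed by (simp add: cf)
  next
    fix v v' assume r: "r = (\<lambda>w. word_elem [GS v, GE v'] w - (if v = v' then word_elem [GV (head E v)] w else 0))"
      and vv: "v \<in> arcs E" "v' \<in> arcs E"
    show ?thesis
    proof (cases "v = v'")
      case True then show ?thesis using r vv by (simp add: wdiff_carrier gens_GS gens_GE gens_GV head_v)
    next
      case False
      then show ?thesis using r vv word_carrier[of "[GS v, GE v']"] by (simp add: gens_GS gens_GE)
    qed
  qed (auto intro!: wdiff_carrier simp: gens_GV gens_GE gens_GS tail_v head_v)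
qed

lemma ideal_I: "ideal (cohn_ideal E X) (cohn_free E :: (('v, 'e) cohn_gen list \<Rightarrow> 'r::ring_1) ring)"
  unfolding cohn_ideal_def by (rule ring.genideal_ideal[OF ring_F rels_carrier])

lemma rel_in_I: "r \<in> cohn_relations E X \<Longrightarrow> (r :: ('v, 'e) cohn_gen list \<Rightarrow> 'r::ring_1) \<in> cohn_ideal E X"
  unfolding cohn_ideal_def using ring.genideal_self[OF ring_F rels_carrier] by auto

end


context cctx begin

definition proj :: "('i \<times> 'a \<times> 'i) bw set \<Rightarrow> (('v, 'e) cohn_gen list \<Rightarrow> 'r::ring_1) \<Rightarrow> (('v, 'e) cohn_gen list \<Rightarrow> 'r)" where
  "proj W h = (\<lambda>w. if wt w \<in> W then h w else 0)"

lemma proj_carrier: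
  assumes "h \<in> carrier (cohn_free E)"
  shows "proj W h \<in> carrier (cohn_free E)"
proof -
  have "{w. proj W h w \<noteq> 0} \<subseteq> {w. h w \<noteq> 0}" by (auto simp: proj_def)
  moreover have "finite {w. h w \<noteq> 0}" using assms by (simp add: cf fa_carrier)
  ultimately have "finite {w. proj W h w \<noteq> 0}" by (rule finite_subset)
  then show ?thesis using assms unfolding cf fa_carrier by (simp add: proj_def)
qed

lemma hom_proj:
  assumes "\<forall>w. h w \<noteq> 0 \<longrightarrow> wt w = t"
  shows "proj W h = (if t \<in> W then h else (\<lambda>w. 0))"
  using assms by (auto simp: proj_def fun_eq_iff)

lemma I_zero: "(\<lambda>w. 0) \<in> cohn_ideal E X"
  using ideal.axioms(1)[OF ideal_I] additive_subgroup.zero_closed by (fastforce simp: cf fa_zero)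

lemma I_add: "a \<in> cohn_ideal E X \<Longrightarrow> b \<in> cohn_ideal E X \<Longrightarrow> (\<lambda>w. a w + b w) \<in> cohn_ideal E X"
  using additive_subgroup.a_closed[OF ideal.axioms(1)[OF ideal_I]] by (fastforce simp: cf fa_add)

lemma I_carr: "a \<in> cohn_ideal E X \<Longrightarrow> a \<in> carrier (cohn_free E)"
  using ideal.Icarr[OF ideal_I] by blast

lemma I_neg: "a \<in> cohn_ideal E X \<Longrightarrow> (\<lambda>w. - a w) \<in> cohn_ideal E X"
  using additive_subgroup.a_inv_closed[OF ideal.axioms(1)[OF ideal_I]] I_carr[of a] fa_a_inv
  by (fastforce simp: cf)

lemma I_diff: "a \<in> cohn_ideal E X \<Longrightarrow> b \<in> cohn_ideal E X \<Longrightarrow> (\<lambda>w. a w - b w) \<in> cohn_ideal E X"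
  using I_add[OF _ I_neg[of b]] by simp

lemma I_lmult: "a \<in> cohn_ideal E X \<Longrightarrow> x \<in> carrier (cohn_free E) \<Longrightarrow> x \<otimes>\<^bsub>cohn_free E\<^esub> a \<in> cohn_ideal E X"
  using ideal.I_l_closed[OF ideal_I] by blast
lemma I_rmult: "a \<in> cohn_ideal E X \<Longrightarrow> x \<in> carrier (cohn_free E) \<Longrightarrow> a \<otimes>\<^bsub>cohn_free E\<^esub> x \<in> cohn_ideal E X"
  using ideal.I_r_closed[OF ideal_I] by blast

lemma two_word: "(word_elem A w - (word_elem B w :: 'r::ring_1)) \<noteq> 0 \<Longrightarrow> w = A \<or> w = B"
  by (auto simp: word_elem_def split: if_splits)

lemma we_arc_wts:
  assumes a: "a \<in> arcs E"
  shows "wt [GV (tail E a), GE a] = wt [GE a]" "wt [GE a, GV (head E a)] = wt [GE a]"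
    "wt [GV (head E a), GS a] = wt [GS a]" "wt [GS a, GV (tail E a)] = wt [GS a]"
    "wt [GS a, GE a] = wt [GV (head E a)]"
    "wt [GE a, GS a] = wt [GV (tail E a)]"
proof -
  obtain i g j where w: "we a = (i, g, j)" "i \<in> I" "g \<in> carrier G" "j \<in> I"
    "wv (tail E a) = (i, \<one>\<^bsub>G\<^esub>, i)" "wv (head E a) = (j, \<one>\<^bsub>G\<^esub>, j)"
    using we_arc[OF a] by auto
  have ig: "inv\<^bsub>G\<^esub> g \<in> carrier G" using grp w by simp
  note s = wt_two wt_single lw_GV[OF tail_v[OF a]] lw_GV[OF head_v[OF a]] lw_GE[OF a] lw_GS[OF a] w
  show "wt [GV (tail E a), GE a] = wt [GE a]" using mon by (simp add: s)
  show "wt [GE a, GV (head E a)] = wt [GE a]" using mon by (simp add: s)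
  show "wt [GV (head E a), GS a] = wt [GS a]" using mon ig by (simp add: s)
  show "wt [GS a, GV (tail E a)] = wt [GS a]" using mon ig by (simp add: s)
  show "wt [GS a, GE a] = wt [GV (head E a)]" using grp by (simp add: s group.l_inv group.r_inv)
  show "wt [GE a, GS a] = wt [GV (tail E a)]" using grp by (simp add: s group.l_inv group.r_inv)
qed

lemma wt_vv: "v \<in> verts E \<Longrightarrow> wt [GV v, GV v] = wt [GV v]"
  using wv_idem[of v] mon by (auto simp: wt_two wt_single lw_GV)

lemma rel_hom:
  assumes "r \<in> cohn_relations E X"
  shows "\<exists>t. \<forall>w. (r :: ('v, 'e) cohn_gen list \<Rightarrow> 'r::ring_1) w \<noteq> 0 \<longrightarrow> wt w = t"
  using assms unfolding cohn_relations_def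
proof (elim UnE CollectE exE conjE)
  fix v v' assume r: "r = (\<lambda>w. word_elem [GV v, GV v'] w - (if v = v' then word_elem [GV v] w else 0))"
    and vv: "v \<in> verts E" "v' \<in> verts E"
  show ?thesis
  proof (cases "v = v'")
    case True
    then show ?thesis using r wt_vv[OF vv(1)] by (intro exI[of _ "wt [GV v]"]) (auto simp: word_elem_def split: if_splits)
  next
    case False
    then show ?thesis using r by (intro exI[of _ "wt [GV v, GV v']"]) (auto simp: word_elem_def split: if_splits)
  qed
next
  fix v assume r: "r = (\<lambda>w. (\<Sum>a\<in>out_arcs E v. word_elem [GE a, GS a] w) - word_elem [GV v] w)" and v: "v \<in> X"
  show ?thesis
  proof (intro exI[of _ "wt [GV v]"] allI impI)
    fix w assume "r w \<noteq> 0"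
    then have "(\<Sum>a\<in>out_arcs E v. word_elem [GE a, GS a] w :: 'r) \<noteq> 0 \<or> w = [GV v]"
      using r by (auto simp: word_elem_def split: if_splits)
    then show "wt w = wt [GV v]"
    proof
      assume "(\<Sum>a\<in>out_arcs E v. word_elem [GE a, GS a] w :: 'r) \<noteq> 0"
      then obtain a where "a \<in> out_arcs E v" "(word_elem [GE a, GS a] w :: 'r) \<noteq> 0"
        using sum_nonzero_ex by blast
      then show ?thesis using we_arc_wts(6)[of a] by (auto simp: word_elem_def split: if_splits)
    qed simp
  qed
next
  fix v v' assume r: "r = (\<lambda>w. word_elem [GS v, GE v'] w - (if v = v' then word_elem [GV (head E v)] w else 0))"
    and vv: "v \<in> arcs E" "v' \<in> arcs E"
  show ?thesis
  proof (cases "v = v'")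
    case True
    then show ?thesis using r we_arc_wts(5)[OF vv(1)] by (intro exI[of _ "wt [GV (head E v)]"]) (auto simp: word_elem_def split: if_splits)
  next
    case False
    then show ?thesis using r by (intro exI[of _ "wt [GS v, GE v']"]) (auto simp: word_elem_def split: if_splits)
  qed
qed (use we_arc_wts in \<open>fastforce simp: word_elem_def split: if_splits\<close>)+

lemma graded_ideal:
  assumes "h \<in> cohn_ideal E X"
  shows "proj W (h :: ('v, 'e) cohn_gen list \<Rightarrow> 'r::ring_1) \<in> cohn_ideal E X"
proof -
  define J where "J = {h \<in> carrier (cohn_free E). \<forall>W. proj W (h :: ('v, 'e) cohn_gen list \<Rightarrow> 'r::ring_1) \<in> cohn_ideal E X}"
  have "ideal J (free_algebra (cohn_gens E))"
  proof (rule fa_ideal_crit)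
    show "J \<subseteq> carrier (free_algebra (cohn_gens E))" by (auto simp: J_def cf)
    show "(\<lambda>w. 0) \<in> J" using I_zero by (auto simp: J_def proj_def cf fa_carrier)
  next
    fix a b assume "a \<in> J" "b \<in> J"
    then show "(\<lambda>w. a w + b w) \<in> J"
      using I_add[of "proj W a" "proj W b" for W]
      by (auto simp: J_def cf fa_add_closed proj_def if_distrib cong: if_cong)
  next
    fix a assume "a \<in> J"
    then show "(\<lambda>w. - a w) \<in> J"
      using I_neg[of "proj W a" for W]
      by (auto simp: J_def cf fa_neg_closed proj_def if_distrib cong: if_cong)
  next
    fix a r u assume a: "a \<in> J" and u: "set u \<subseteq> cohn_gens E"
    have car: "sc r u \<otimes>\<^bsub>free_algebra (cohn_gens E)\<^esub> a \<in> carrier (free_algebra (cohn_gens E))"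
      unfolding fa_mult by (rule fa_mult_closed) (use a u in \<open>auto simp: J_def cf intro: sc_carrier\<close>)
    have "proj W (sc r u \<otimes>\<^bsub>free_algebra (cohn_gens E)\<^esub> a) = sc r u \<otimes>\<^bsub>free_algebra (cohn_gens E)\<^esub> proj {s. bmul G (wt u) s \<in> W} a" for W
    proof (rule ext)
      fix w
      show "proj W (sc r u \<otimes>\<^bsub>free_algebra (cohn_gens E)\<^esub> a) w = (sc r u \<otimes>\<^bsub>free_algebra (cohn_gens E)\<^esub> proj {s. bmul G (wt u) s \<in> W} a) w"
      proof (cases "take (length u) w = u")
        case True
        then have "w = u @ drop (length u) w" by (metis append_take_drop_id)
        then have "wt w = bmul G (wt u) (wt (drop (length u) w))" by (metis wt_append)
        then show ?thesis using True by (simp add: proj_def sc_mult_left_pt)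
      qed (simp add: proj_def sc_mult_left_pt)
    qed
    then show "sc r u \<otimes>\<^bsub>free_algebra (cohn_gens E)\<^esub> a \<in> J"
      using a car I_lmult[of "proj _ a" "sc r u"] sc_carrier[OF u]
      by (auto simp: J_def cf)
  next
    fix a r u assume a: "a \<in> J" and u: "set u \<subseteq> cohn_gens E"
    have car: "a \<otimes>\<^bsub>free_algebra (cohn_gens E)\<^esub> sc r u \<in> carrier (free_algebra (cohn_gens E))"
      unfolding fa_mult by (rule fa_mult_closed) (use a u in \<open>auto simp: J_def cf intro: sc_carrier\<close>)
    have "proj W (a \<otimes>\<^bsub>free_algebra (cohn_gens E)\<^esub> sc r u) = proj {s. bmul G s (wt u) \<in> W} a \<otimes>\<^bsub>free_algebra (cohn_gens E)\<^esub> sc r u" for W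
    proof (rule ext)
      fix w
      show "proj W (a \<otimes>\<^bsub>free_algebra (cohn_gens E)\<^esub> sc r u) w = (proj {s. bmul G s (wt u) \<in> W} a \<otimes>\<^bsub>free_algebra (cohn_gens E)\<^esub> sc r u) w"
      proof (cases "length u \<le> length w \<and> drop (length w - length u) w = u")
        case True
        then have "w = take (length w - length u) w @ u" by (metis append_take_drop_id)
        then have "wt w = bmul G (wt (take (length w - length u) w)) (wt u)" by (metis wt_append)
        then show ?thesis using True by (simp add: proj_def sc_mult_right_pt)
      qed (auto simp add: proj_def sc_mult_right_pt)
    qed
    then show "a \<otimes>\<^bsub>free_algebra (cohn_gens E)\<^esub> sc r u \<in> J"
      using a car I_rmult[of "proj _ a" "sc r u"] sc_carrier[OF u]
      by (auto simp: J_def cf)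
  qed
  then have idJ: "ideal J (cohn_free E)" by (simp add: cf)
  have "cohn_relations E X \<subseteq> J"
  proof
    fix r :: "('v, 'e) cohn_gen list \<Rightarrow> 'r" assume r: "r \<in> cohn_relations E X"
    obtain t where t: "\<forall>w. r w \<noteq> 0 \<longrightarrow> wt w = t" using rel_hom[OF r] by auto
    show "r \<in> J" unfolding J_def
      using hom_proj[OF t] rel_in_I[OF r] I_zero rels_carrier r by auto
  qed
  then have "cohn_ideal E X \<subseteq> J"
    unfolding cohn_ideal_def by (rule ring.genideal_minimal[OF ring_F idJ])
  then show ?thesis using assms by (auto simp: J_def)
qed

lemma diff_weight_in_I:
  assumes "(\<lambda>w. word_elem u w - (word_elem u' w :: 'r::ring_1)) \<in> cohn_ideal E X" "wt u \<noteq> wt u'"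
  shows "(word_elem u :: ('v, 'e) cohn_gen list \<Rightarrow> 'r::ring_1) \<in> cohn_ideal E X"
proof -
  have "proj {wt u} (\<lambda>w. word_elem u w - (word_elem u' w :: 'r)) = word_elem u"
    using assms(2) by (auto simp: proj_def word_elem_def fun_eq_iff)
  then show ?thesis using graded_ideal[OF assms(1), of "{wt u}"] by simp
qed

end


definition eqvI :: "('g list \<Rightarrow> 'r::ring_1) set \<Rightarrow> 'g list \<Rightarrow> 'g list \<Rightarrow> bool" where
  "eqvI J u u' \<longleftrightarrow> (\<lambda>w. word_elem u w - word_elem u' w) \<in> J"
definition zerI :: "('g list \<Rightarrow> 'r::ring_1) set \<Rightarrow> 'g list \<Rightarrow> bool" where
  "zerI J u \<longleftrightarrow> word_elem u \<in> J"

lemma word_prefix1: "take (length p) w = p \<Longrightarrow> word_elem (p @ u) w = word_elem u (drop (length p) w)"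
  by (auto simp: word_elem_def) (metis append_take_drop_id)
lemma word_prefix2: "take (length p) w \<noteq> p \<Longrightarrow> word_elem (p @ u) w = 0"
  by (auto simp: word_elem_def)
lemma word_suffix1: "length q \<le> length w \<Longrightarrow> drop (length w - length q) w = q \<Longrightarrow>
    word_elem (u @ q) w = word_elem u (take (length w - length q) w)"
  by (auto simp: word_elem_def) (metis append_take_drop_id)
lemma word_suffix2: "\<not> (length q \<le> length w \<and> drop (length w - length q) w = q) \<Longrightarrow> word_elem (u @ q) w = 0"
  by (auto simp: word_elem_def)

definition monow :: "'v \<times> 'e list \<Rightarrow> 'v \<times> 'e list \<Rightarrow> ('v, 'e) cohn_gen list" where
  "monow \<mu> \<eta> = path_word \<mu> @ path_star_word \<eta>"

locale cctxr = cctx E X G I wv we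
  for E :: "('v, 'e) pre_digraph" and X :: "'v set" and G :: "('a, 'b) monoid_scheme"
    and I :: "'i set" and wv :: "'v \<Rightarrow> 'i \<times> 'a \<times> 'i" and we :: "'e \<Rightarrow> 'i \<times> 'a \<times> 'i" +
  fixes rty :: "'r::ring_1 itself"
begin

abbreviation II where "II \<equiv> (cohn_ideal E X :: (('v, 'e) cohn_gen list \<Rightarrow> 'r) set)"

definition okp :: "'v \<times> 'e list \<Rightarrow> 'v \<times> 'e list \<Rightarrow> bool" where
  "okp \<mu> \<eta> \<longleftrightarrow> cohn_is_path E \<mu> \<and> cohn_is_path E \<eta> \<and> cohn_path_range E \<mu> = cohn_path_range E \<eta>"

lemma eqv_refl: "eqvI II u u"
  using I_zero by (simp add: eqvI_def)

lemma eqv_sym: "eqvI II u u' \<Longrightarrow> eqvI II u' u"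
  unfolding eqvI_def using I_neg by fastforce

lemma eqv_trans: "eqvI II u u' \<Longrightarrow> eqvI II u' u'' \<Longrightarrow> eqvI II u u''"
  unfolding eqvI_def using I_add by fastforce

lemma zer_eqv: "eqvI II u u' \<Longrightarrow> zerI II u' \<Longrightarrow> zerI II u"
  unfolding eqvI_def zerI_def using I_add by fastforce

lemma cong_left:
  assumes "set p \<subseteq> cohn_gens E" "eqvI II u u'"
  shows "eqvI II (p @ u) (p @ u')"
proof -
  let ?D = "(\<lambda>w. word_elem u w - word_elem u' w) :: _ \<Rightarrow> 'r"
  have "sc 1 p \<otimes>\<^bsub>cohn_free E\<^esub> ?D \<in> II"
    using assms I_lmult[of ?D "sc 1 p"] sc_carrier[OF assms(1)] by (auto simp: eqvI_def cf)
  moreover have "sc 1 p \<otimes>\<^bsub>cohn_free E\<^esub> ?D = (\<lambda>w. word_elem (p @ u) w - word_elem (p @ u') w)"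
    by (rule ext) (simp add: cf sc_mult_left_pt word_prefix1 word_prefix2)
  ultimately show ?thesis by (simp add: eqvI_def)
qed

lemma cong_right:
  assumes "set q \<subseteq> cohn_gens E" "eqvI II u u'"
  shows "eqvI II (u @ q) (u' @ q)"
proof -
  let ?D = "(\<lambda>w. word_elem u w - word_elem u' w) :: _ \<Rightarrow> 'r"
  have "?D \<otimes>\<^bsub>cohn_free E\<^esub> sc 1 q \<in> II"
    using assms I_rmult[of ?D "sc 1 q"] sc_carrier[OF assms(1)] by (auto simp: eqvI_def cf)
  moreover have "?D \<otimes>\<^bsub>cohn_free E\<^esub> sc 1 q = (\<lambda>w. word_elem (u @ q) w - word_elem (u' @ q) w)"
    by (rule ext) (simp add: cf sc_mult_right_pt word_suffix1 word_suffix2)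
  ultimately show ?thesis by (simp add: eqvI_def)
qed

lemma cong_both:
  assumes "set p \<subseteq> cohn_gens E" "set q \<subseteq> cohn_gens E" "eqvI II u u'"
  shows "eqvI II (p @ u @ q) (p @ u' @ q)"
  using cong_left[OF assms(1) cong_right[OF assms(2,3)]] by simp

lemma zer_left:
  assumes "set p \<subseteq> cohn_gens E" "zerI II u"
  shows "zerI II (p @ u)"
proof -
  have "word_elem p \<otimes>\<^bsub>cohn_free E\<^esub> (word_elem u :: _ \<Rightarrow> 'r) \<in> II"
    using assms I_lmult word_carrier by (auto simp: zerI_def)
  then show ?thesis by (simp add: zerI_def cf word_mult)
qed

lemma zer_right:
  assumes "set q \<subseteq> cohn_gens E" "zerI II u"
  shows "zerI II (u @ q)"
proof -
  have "(word_elem u :: _ \<Rightarrow> 'r) \<otimes>\<^bsub>cohn_free E\<^esub> word_elem q \<in> II"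
    using assms I_rmult word_carrier by (auto simp: zerI_def)
  then show ?thesis by (simp add: zerI_def cf word_mult)
qed

lemma zer_both:
  assumes "set p \<subseteq> cohn_gens E" "set q \<subseteq> cohn_gens E" "zerI II u"
  shows "zerI II (p @ u @ q)"
  using zer_left[OF assms(1) zer_right[OF assms(2,3)]] .

lemma relI: "r \<in> cohn_relations E X \<Longrightarrow> r = f \<Longrightarrow> f \<in> II"
  using rel_in_I by blast

lemma R1: assumes "v \<in> verts E" shows "eqvI II [GV v, GV v] [GV v]"
proof -
  have "(\<lambda>w. word_elem [GV v, GV v] w - (if v = v then word_elem [GV v] w else 0) :: 'r) \<in> cohn_relations E X"
    unfolding cohn_relations_def using assms by blast
  from rel_in_I[OF this] show ?thesis by (simp add: eqvI_def)
qed

lemma R2: assumes "v \<in> verts E" "v' \<in> verts E" "v \<noteq> v'" shows "zerI II [GV v, GV v']"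
proof -
  have "(\<lambda>w. word_elem [GV v, GV v'] w - (if v = v' then word_elem [GV v] w else 0) :: 'r) \<in> cohn_relations E X"
    unfolding cohn_relations_def using assms by blast
  from rel_in_I[OF this] show ?thesis using assms by (simp add: zerI_def)
qed

lemma R3: assumes "a \<in> arcs E" shows "eqvI II [GV (tail E a), GE a] [GE a]"
proof -
  have "(\<lambda>w. word_elem [GV (tail E a), GE a] w - word_elem [GE a] w :: 'r) \<in> cohn_relations E X"
    unfolding cohn_relations_def using assms by blast
  from rel_in_I[OF this] show ?thesis by (simp add: eqvI_def)
qed

lemma R4: assumes "a \<in> arcs E" shows "eqvI II [GE a, GV (head E a)] [GE a]"
proof -
  have "(\<lambda>w. word_elem [GE a, GV (head E a)] w - word_elem [GE a] w :: 'r) \<in> cohn_relations E X"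
    unfolding cohn_relations_def using assms by blast
  from rel_in_I[OF this] show ?thesis by (simp add: eqvI_def)
qed

lemma R5: assumes "a \<in> arcs E" shows "eqvI II [GV (head E a), GS a] [GS a]"
proof -
  have "(\<lambda>w. word_elem [GV (head E a), GS a] w - word_elem [GS a] w :: 'r) \<in> cohn_relations E X"
    unfolding cohn_relations_def using assms by blast
  from rel_in_I[OF this] show ?thesis by (simp add: eqvI_def)
qed

lemma R6: assumes "a \<in> arcs E" shows "eqvI II [GS a, GV (tail E a)] [GS a]"
proof -
  have "(\<lambda>w. word_elem [GS a, GV (tail E a)] w - word_elem [GS a] w :: 'r) \<in> cohn_relations E X"
    unfolding cohn_relations_def using assms by blast
  from rel_in_I[OF this] show ?thesis by (simp add: eqvI_def)
qed

lemma R7: assumes "a \<in> arcs E" shows "eqvI II [GS a, GE a] [GV (head E a)]"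
proof -
  have "(\<lambda>w. word_elem [GS a, GE a] w - (if a = a then word_elem [GV (head E a)] w else 0) :: 'r) \<in> cohn_relations E X"
    unfolding cohn_relations_def using assms by blast
  from rel_in_I[OF this] show ?thesis by (simp add: eqvI_def)
qed

lemma R8: assumes "a \<in> arcs E" "a' \<in> arcs E" "a \<noteq> a'" shows "zerI II [GS a, GE a']"
proof -
  have "(\<lambda>w. word_elem [GS a, GE a'] w - (if a = a' then word_elem [GV (head E a)] w else 0) :: 'r) \<in> cohn_relations E X"
    unfolding cohn_relations_def using assms by blast
  from rel_in_I[OF this] show ?thesis using assms by (simp add: zerI_def)
qed

end


lemma chain_arcs: "cohn_edge_chain E v es \<Longrightarrow> set es \<subseteq> arcs E"
  by (induction es arbitrary: v) auto

lemma chain_snoc: "cohn_edge_chain E v fs \<Longrightarrow> b \<in> arcs E \<Longrightarrow> tail E b = cohn_path_range E (v, fs) \<Longrightarrow>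
    cohn_edge_chain E v (fs @ [b])"
  by (induction fs arbitrary: v) (auto simp: cohn_path_range_def split: if_splits)

lemma range_cons: "cohn_path_range E (u, a # es) = cohn_path_range E (head E a, es)"
  by (simp add: cohn_path_range_def)

lemma range_snoc: "cohn_path_range E (u, fs @ [b]) = head E b"
  by (simp add: cohn_path_range_def)

lemma path_nil: "cohn_is_path E (v, []) \<longleftrightarrow> v \<in> verts E"
  by (simp add: cohn_is_path_def)

lemma path_cons: "cohn_is_path E (u, a # es) \<longleftrightarrow> u \<in> verts E \<and> a \<in> arcs E \<and> tail E a = u \<and> cohn_edge_chain E (head E a) es"
  by (auto simp: cohn_is_path_def)

context cctxr begin

lemma chain_path: "a \<in> arcs E \<Longrightarrow> cohn_edge_chain E (head E a) es \<Longrightarrow> cohn_is_path E (head E a, es)"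
  by (simp add: cohn_is_path_def head_v)

lemma pw_gens: "cohn_is_path E \<mu> \<Longrightarrow> set (path_word \<mu>) \<subseteq> cohn_gens E"
  by (cases \<mu>) (auto simp: path_word_def cohn_is_path_def cohn_gens_def dest!: chain_arcs)

lemma psw_gens: "cohn_is_path E \<mu> \<Longrightarrow> set (path_star_word \<mu>) \<subseteq> cohn_gens E"
  by (cases \<mu>) (auto simp: path_star_word_def cohn_is_path_def cohn_gens_def dest!: chain_arcs)

lemma monow_gens: "okp \<mu> \<eta> \<Longrightarrow> set (monow \<mu> \<eta>) \<subseteq> cohn_gens E"
  by (simp add: monow_def okp_def pw_gens psw_gens)

lemma monow_ne: "monow \<mu> \<eta> \<noteq> []"
  by (simp add: monow_def path_word_def)

lemma found: "okp \<mu>' \<eta>' \<Longrightarrow> eqvI II w (monow \<mu>' \<eta>') \<Longrightarrow> zerI II w \<or> (\<exists>\<mu> \<eta>. okp \<mu> \<eta> \<and> eqvI II w (monow \<mu> \<eta>))"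
  by blast

lemma step:
  assumes x: "x \<in> cohn_gens E" and ok: "okp \<mu> \<eta>"
  shows "zerI II (x # monow \<mu> \<eta>) \<or> (\<exists>\<mu>' \<eta>'. okp \<mu>' \<eta>' \<and> eqvI II (x # monow \<mu> \<eta>) (monow \<mu>' \<eta>'))"
proof -
  obtain u es where mu: "\<mu> = (u, es)" by (cases \<mu>)
  obtain u2 fs where eta: "\<eta> = (u2, fs)" by (cases \<eta>)
  define Q where "Q = path_star_word \<eta>"
  have Qg: "set Q \<subseteq> cohn_gens E" using ok by (simp add: Q_def okp_def psw_gens)
  have peta: "cohn_is_path E \<eta>" using ok by (simp add: okp_def)
  have rng: "cohn_path_range E \<mu> = cohn_path_range E \<eta>" using ok by (simp add: okp_def)
  show ?thesis
  proof (cases x)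
    case (GV v)
    have v: "v \<in> verts E" using x GV by (auto simp: cohn_gens_def)
    show ?thesis
    proof (cases es)
      case Nil
      have m: "monow \<mu> \<eta> = GV u # Q" by (simp add: monow_def mu Nil Q_def path_word_def)
      have u: "u \<in> verts E" using ok by (simp add: okp_def mu Nil path_nil)
      show ?thesis
      proof (cases "v = u")
        case True
        have "eqvI II ([GV v, GV v] @ Q) ([GV v] @ Q)" by (rule cong_right[OF Qg R1[OF v]])
        then show ?thesis using ok True by (intro disjI2 exI[of _ \<mu>] exI[of _ \<eta>]) (simp add: GV m)
      next
        case False
        have "zerI II ([GV v, GV u] @ Q)" by (rule zer_right[OF Qg R2[OF v u False]])
        then show ?thesis by (simp add: GV m)
      qed
    next
      case (Cons a es')
      note esC = Cons
      have p: "u \<in> verts E" "a \<in> arcs E" "tail E a = u" using ok by (auto simp: okp_def mu Cons path_cons)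
      define rest where "rest = map GE es' @ Q"
      have rg: "set rest \<subseteq> cohn_gens E" using ok Qg
        by (auto simp: rest_def okp_def mu Cons path_cons cohn_gens_def dest!: chain_arcs)
      have m: "monow \<mu> \<eta> = GE a # rest" by (simp add: monow_def mu Cons Q_def path_word_def rest_def)
      show ?thesis
      proof (cases "v = u")
        case True
        have "eqvI II ([GV (tail E a), GE a] @ rest) ([GE a] @ rest)" by (rule cong_right[OF rg R3[OF p(2)]])
        then show ?thesis using ok True p by (intro disjI2 exI[of _ \<mu>] exI[of _ \<eta>]) (simp add: GV m)
      next
        case False
        have e1: "eqvI II ([GV v] @ [GE a]) ([GV v] @ [GV (tail E a), GE a])"
          by (rule cong_left) (use v R3[OF p(2)] eqv_sym in \<open>auto simp: cohn_gens_def\<close>)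
        have "zerI II [GV v, GV (tail E a)]" using R2[OF v p(1)] False p(3) by simp
        then have z1: "zerI II ([GV v, GV (tail E a)] @ [GE a])"
          by (intro zer_right) (simp_all add: gens_GE p(2))
        have "zerI II ([GV v, GE a])" using zer_eqv[OF e1] z1 by simp
        then have "zerI II ([GV v, GE a] @ rest)" by (rule zer_right[OF rg])
        then show ?thesis by (simp add: GV m)
      qed
    qed
  next
    case (GE b)
    have b: "b \<in> arcs E" using x GE by (auto simp: cohn_gens_def)
    show ?thesis
    proof (cases es)
      case Nil
      have m: "monow \<mu> \<eta> = GV u # Q" by (simp add: monow_def mu Nil Q_def path_word_def)
      have u: "u \<in> verts E" using ok by (simp add: okp_def mu Nil path_nil)
      show ?thesis
      proof (cases "head E b = u")
        case True
        have e: "eqvI II ([GE b, GV (head E b)] @ Q) ([GE b] @ Q)" by (rule cong_right[OF Qg R4[OF b]])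
        have ok': "okp (tail E b, [b]) \<eta>"
          using ok True b tail_v[OF b] by (auto simp: okp_def mu Nil path_cons cohn_path_range_def)
        have "monow (tail E b, [b]) \<eta> = [GE b] @ Q" by (simp add: monow_def Q_def path_word_def)
        then show ?thesis using e True by (intro found[OF ok']) (simp add: GE m)
      next
        case False
        have e1: "eqvI II ([GE b] @ [GV u]) ([GE b, GV (head E b)] @ [GV u])"
          by (rule cong_right) (use u R4[OF b] eqv_sym in \<open>auto simp: cohn_gens_def\<close>)
        have z1: "zerI II ([GE b] @ [GV (head E b), GV u])"
          by (rule zer_left) (use b R2[OF head_v[OF b] u] False in \<open>auto simp: cohn_gens_def\<close>)
        have "zerI II [GE b, GV u]" using zer_eqv[OF e1] z1 by simp
        then have "zerI II ([GE b, GV u] @ Q)" by (rule zer_right[OF Qg])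
        then show ?thesis by (simp add: GE m)
      qed
    next
      case (Cons a es')
      note esC = Cons
      have p: "u \<in> verts E" "a \<in> arcs E" "tail E a = u" "cohn_edge_chain E (head E a) es'"
        using ok by (auto simp: okp_def mu Cons path_cons)
      define rest where "rest = map GE es' @ Q"
      have rg: "set rest \<subseteq> cohn_gens E" using ok Qg
        by (auto simp: rest_def okp_def mu Cons path_cons cohn_gens_def dest!: chain_arcs)
      have m: "monow \<mu> \<eta> = GE a # rest" by (simp add: monow_def mu Cons Q_def path_word_def rest_def)
      show ?thesis
      proof (cases "head E b = tail E a")
        case True
        have ok': "okp (tail E b, b # a # es') \<eta>"
          using ok True b p tail_v[OF b] rng by (auto simp: okp_def mu Cons path_cons range_cons)
        have "monow (tail E b, b # a # es') \<eta> = GE b # GE a # rest"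
          by (simp add: monow_def Q_def path_word_def rest_def)
        then show ?thesis using ok' eqv_refl by (metis GE m)
      next
        case False
        have e1: "eqvI II ([GE b] @ [GE a]) ([GE b, GV (head E b)] @ [GE a])"
          by (rule cong_right) (use p R4[OF b] eqv_sym in \<open>auto simp: cohn_gens_def\<close>)
        have e2: "eqvI II ([GE b, GV (head E b)] @ [GE a]) ([GE b, GV (head E b)] @ [GV (tail E a), GE a])"
          by (rule cong_left) (use b head_v[OF b] R3[OF p(2)] eqv_sym in \<open>auto simp: cohn_gens_def\<close>)
        have z1: "zerI II ([GE b] @ [GV (head E b), GV (tail E a)] @ [GE a])"
          by (rule zer_both) (use b p R2[OF head_v[OF b] tail_v[OF p(2)]] False in \<open>auto simp: cohn_gens_def\<close>)
        have "zerI II [GE b, GE a]" using zer_eqv[OF eqv_trans[OF e1 e2]] z1 by simp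
        then have "zerI II ([GE b, GE a] @ rest)" by (rule zer_right[OF rg])
        then show ?thesis by (simp add: GE m)
      qed
    qed
  next
    case (GS b)
    have b: "b \<in> arcs E" using x GS by (auto simp: cohn_gens_def)
    show ?thesis
    proof (cases es)
      case Nil
      have m: "monow \<mu> \<eta> = GV u # Q" by (simp add: monow_def mu Nil Q_def path_word_def)
      have u: "u \<in> verts E" using ok by (simp add: okp_def mu Nil path_nil)
      have ru: "cohn_path_range E \<eta> = u" using rng by (simp add: mu Nil cohn_path_range_def)
      show ?thesis
      proof (cases "tail E b = u")
        case True
        have e0: "eqvI II ([GS b, GV (tail E b)] @ Q) ([GS b] @ Q)" by (rule cong_right[OF Qg R6[OF b]])
        have ok': "okp (head E b, []) (tail E b, [b])"
          using b head_v[OF b] tail_v[OF b] by (auto simp: okp_def path_nil path_cons cohn_path_range_def)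
        have mm: "monow (head E b, []) (tail E b, [b]) = [GV (head E b), GS b]"
          by (simp add: monow_def path_word_def path_star_word_def)
        show ?thesis
        proof (cases fs)
          case Nil
          have Q: "Q = [GV u]" using ru by (simp add: Q_def eta Nil path_star_word_def cohn_path_range_def)
          have e0': "eqvI II [GS b, GV u, GV u] [GS b, GV u]" using e0 True Q by simp
          have e1': "eqvI II [GS b, GV u] [GV (head E b), GS b]"
            using eqv_trans[OF R6[OF b] eqv_sym[OF R5[OF b]]] True by simp
          have "eqvI II [GS b, GV u, GV u] [GV (head E b), GS b]" by (rule eqv_trans[OF e0' e1'])
          then show ?thesis using mm by (intro found[OF ok']) (simp add: GS m Q)
        next
          case (Cons f fs')
          have Q: "Q = map GS (rev fs)" by (simp add: Q_def eta Cons path_star_word_def)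
          have e1: "eqvI II ([GS b] @ Q) ([GV (head E b), GS b] @ Q)"
            by (rule cong_right[OF Qg eqv_sym[OF R5[OF b]]])
          have ok2: "okp (head E b, []) (u2, fs @ [b])"
          proof -
            have "cohn_edge_chain E u2 fs" "u2 \<in> verts E" using peta by (auto simp: eta cohn_is_path_def)
            moreover have "tail E b = cohn_path_range E (u2, fs)" using ru True eta by simp
            ultimately show ?thesis using b head_v[OF b]
              by (auto simp: okp_def path_nil cohn_is_path_def range_snoc intro!: chain_snoc)
                 (simp add: cohn_path_range_def)
          qed
          have "monow (head E b, []) (u2, fs @ [b]) = [GV (head E b), GS b] @ Q"
            by (simp add: monow_def path_word_def path_star_word_def Q)
          then show ?thesis using eqv_trans[OF e0 e1] True by (intro found[OF ok2]) (simp add: GS m)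
        qed
      next
        case False
        have e1: "eqvI II ([GS b] @ [GV u]) ([GS b, GV (tail E b)] @ [GV u])"
          by (rule cong_right) (use u R6[OF b] eqv_sym in \<open>auto simp: cohn_gens_def\<close>)
        have z1: "zerI II ([GS b] @ [GV (tail E b), GV u])"
          by (rule zer_left) (use b R2[OF tail_v[OF b] u] False in \<open>auto simp: cohn_gens_def\<close>)
        have "zerI II [GS b, GV u]" using zer_eqv[OF e1] z1 by simp
        then have "zerI II ([GS b, GV u] @ Q)" by (rule zer_right[OF Qg])
        then show ?thesis by (simp add: GS m)
      qed
    next
      case (Cons a es')
      note esC = Cons
      have p: "u \<in> verts E" "a \<in> arcs E" "tail E a = u" "cohn_edge_chain E (head E a) es'"
        using ok by (auto simp: okp_def mu Cons path_cons)
      define rest where "rest = map GE es' @ Q"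
      have rg: "set rest \<subseteq> cohn_gens E" using ok Qg
        by (auto simp: rest_def okp_def mu Cons path_cons cohn_gens_def dest!: chain_arcs)
      have m: "monow \<mu> \<eta> = GE a # rest" by (simp add: monow_def mu Cons Q_def path_word_def rest_def)
      show ?thesis
      proof (cases "a = b")
        case True
        have e0: "eqvI II ([GS b, GE b] @ rest) ([GV (head E b)] @ rest)" by (rule cong_right[OF rg R7[OF b]])
        show ?thesis
        proof (cases es')
          case Nil
          have ok': "okp (head E b, []) \<eta>"
            using ok True b head_v[OF b] rng by (auto simp: okp_def mu Cons Nil path_nil cohn_path_range_def)
          have "monow (head E b, []) \<eta> = [GV (head E b)] @ rest"
            by (simp add: monow_def path_word_def rest_def Nil Q_def)
          then show ?thesis using e0 True by (intro found[OF ok']) (simp add: GS m)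
        next
          case (Cons c es'')
          have c: "c \<in> arcs E" "tail E c = head E a" using p(4) Cons by auto
          have e1: "eqvI II ([GV (tail E c), GE c] @ (map GE es'' @ Q)) ([GE c] @ (map GE es'' @ Q))"
            by (rule cong_right) (use Qg rg Cons R3[OF c(1)] in \<open>auto simp: rest_def\<close>)
          have ok': "okp (head E a, es') \<eta>"
            using ok p chain_path[OF p(2) p(4)] rng by (auto simp: okp_def mu range_cons esC)
          have mm: "monow (head E a, es') \<eta> = [GE c] @ (map GE es'' @ Q)"
            by (simp add: monow_def path_word_def local.Cons Q_def)
          have "[GV (head E b)] @ rest = [GV (tail E c), GE c] @ (map GE es'' @ Q)"
            using c True by (simp add: rest_def local.Cons)
          then have e0': "eqvI II ([GS b, GE b] @ rest) ([GV (tail E c), GE c] @ (map GE es'' @ Q))"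
            using e0 by simp
          show ?thesis using eqv_trans[OF e0' e1] True mm by (intro found[OF ok']) (simp add: GS m)
        qed
      next
        case False
        have "zerI II ([GS b, GE a] @ rest)" by (rule zer_right[OF rg R8[OF b p(2)]]) (use False in auto)
        then show ?thesis by (simp add: GS m)
      qed
    qed
  qed
qed

lemma reduce:
  assumes "w \<noteq> []" "set w \<subseteq> cohn_gens E"
  shows "zerI II w \<or> (\<exists>\<mu> \<eta>. okp \<mu> \<eta> \<and> eqvI II w (monow \<mu> \<eta>))"
  using assms
proof (induction w)
  case (Cons x w)
  have x: "x \<in> cohn_gens E" using Cons.prems by auto
  show ?case
  proof (cases w)
    case Nil
    show ?thesis
    proof (cases x)
      case (GV v)
      have v: "v \<in> verts E" using x GV by (auto simp: cohn_gens_def)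
      have "okp (v, []) (v, [])" using v by (simp add: okp_def path_nil)
      moreover have "monow (v, []) (v, []) = [GV v, GV v]" by (simp add: monow_def path_word_def path_star_word_def)
      ultimately show ?thesis using eqv_sym[OF R1[OF v]]
        by (intro disjI2 exI[of _ "(v, [])"] exI[of _ "(v, [])"]) (simp add: Nil GV monow_def path_word_def path_star_word_def)
    next
      case (GE a)
      have a: "a \<in> arcs E" using x GE by (auto simp: cohn_gens_def)
      have "okp (tail E a, [a]) (head E a, [])" using a tail_v[OF a] head_v[OF a]
        by (simp add: okp_def path_nil path_cons cohn_path_range_def)
      moreover have "monow (tail E a, [a]) (head E a, []) = [GE a, GV (head E a)]"
        by (simp add: monow_def path_word_def path_star_word_def)
      ultimately show ?thesis using eqv_sym[OF R4[OF a]] found[of "(tail E a, [a])" "(head E a, [])" "[GE a]"]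
        by (simp add: Nil GE)
    next
      case (GS a)
      have a: "a \<in> arcs E" using x GS by (auto simp: cohn_gens_def)
      have "okp (head E a, []) (tail E a, [a])" using a tail_v[OF a] head_v[OF a]
        by (simp add: okp_def path_nil path_cons cohn_path_range_def)
      moreover have "monow (head E a, []) (tail E a, [a]) = [GV (head E a), GS a]"
        by (simp add: monow_def path_word_def path_star_word_def)
      ultimately show ?thesis using eqv_sym[OF R5[OF a]] found[of "(head E a, [])" "(tail E a, [a])" "[GS a]"]
        by (simp add: Nil GS)
    qed
  next
    case (Cons y ys)
    then have IH: "zerI II w \<or> (\<exists>\<mu> \<eta>. okp \<mu> \<eta> \<and> eqvI II w (monow \<mu> \<eta>))" using Cons.IH Cons.prems by auto
    then show ?thesis
    proof
      assume "zerI II w"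
      then show ?thesis using zer_left[of "[x]" w] x by auto
    next
      assume "\<exists>\<mu> \<eta>. okp \<mu> \<eta> \<and> eqvI II w (monow \<mu> \<eta>)"
      then obtain \<mu> \<eta> where ok: "okp \<mu> \<eta>" and e: "eqvI II w (monow \<mu> \<eta>)" by auto
      have e': "eqvI II (x # w) (x # monow \<mu> \<eta>)" using cong_left[of "[x]", OF _ e] x by simp
      from step[OF x ok] show ?thesis
      proof
        assume "zerI II (x # monow \<mu> \<eta>)"
        then show ?thesis using zer_eqv[OF e'] by auto
      next
        assume "\<exists>\<mu>' \<eta>'. okp \<mu>' \<eta>' \<and> eqvI II (x # monow \<mu> \<eta>) (monow \<mu>' \<eta>')"
        then show ?thesis using eqv_trans[OF e'] by blast
      qed
    qed
  qed
qed simp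

end


context cctxr begin

lemma good_emb_pw_step: "good G I (emb s0) \<Longrightarrow> a \<in> arcs E \<Longrightarrow> good G I (emb (brandt_mult G s0 (Some (we a))))"
  using good_bmul[OF mon, where x="emb s0" and y="BEl (we a)"] good_lw[of "GE a"] by (simp add: emb_mult lw_GE)

lemma foldl_emb:
  assumes "set es \<subseteq> arcs E" "good G I (emb s0)"
  shows "emb (foldl (\<lambda>acc a. brandt_mult G acc (Some (we a))) s0 es) = bmul G (emb s0) (wt (map GE es))"
  using assms
proof (induction es arbitrary: s0)
  case (Cons a es)
  have a: "a \<in> arcs E" using Cons.prems by auto
  have IH: "emb (foldl (\<lambda>acc a. brandt_mult G acc (Some (we a))) (brandt_mult G s0 (Some (we a))) es)
      = bmul G (emb (brandt_mult G s0 (Some (we a)))) (wt (map GE es))"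
    using Cons.IH[of "brandt_mult G s0 (Some (we a))"] Cons.prems good_emb_pw_step[OF Cons.prems(2) a] by auto
  have "bmul G (emb (brandt_mult G s0 (Some (we a)))) (wt (map GE es)) = bmul G (emb s0) (bmul G (lw (GE a)) (wt (map GE es)))"
    using bmul_assoc[OF mon Cons.prems(2) good_lw[of "GE a"] good_wt] by (simp add: emb_mult lw_GE[OF a])
  then show ?case using IH by (simp add: wt_Cons)
qed simp

lemma wt_pw: "cohn_is_path E \<mu> \<Longrightarrow> wt (path_word \<mu>) = emb (path_weight G wv we \<mu>)"
proof -
  assume p: "cohn_is_path E \<mu>"
  obtain v es where mu: "\<mu> = (v, es)" by (cases \<mu>)
  show ?thesis
  proof (cases es)
    case Nil
    then show ?thesis using p by (simp add: mu path_word_def path_weight_def wt_single lw_GV cohn_is_path_def)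
  next
    case (Cons a es')
    have sa: "set es \<subseteq> arcs E" using p by (auto simp: mu cohn_is_path_def dest: chain_arcs)
    then have a: "a \<in> arcs E" "set es' \<subseteq> arcs E" using Cons by auto
    have g: "good G I (emb (Some (we a)))" using good_lw[of "GE a"] by (simp add: lw_GE[OF a(1)])
    show ?thesis using foldl_emb[OF a(2) g]
      by (simp add: mu Cons path_word_def path_weight_def wt_Cons lw_GE[OF a(1)])
  qed
qed

lemma wt_star_edges: "set es \<subseteq> arcs E \<Longrightarrow> wt (map GS (rev es)) = binvb G (wt (map GE es))"
proof (induction es)
  case (Cons a es)
  have a: "a \<in> arcs E" using Cons.prems by auto
  have "wt (map GS (rev (a # es))) = bmul G (wt (map GS (rev es))) (lw (GS a))"
    by (simp add: wt_append wt_single)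
  also have "\<dots> = bmul G (binvb G (wt (map GE es))) (binvb G (lw (GE a)))"
    using Cons by (simp add: lw_GS[OF a] lw_GE[OF a])
  also have "\<dots> = binvb G (bmul G (lw (GE a)) (wt (map GE es)))"
    by (rule binvb_bmul[OF grp good_lw good_wt, symmetric])
  finally show ?case by (simp add: wt_Cons)
qed simp

lemma wt_psw: "cohn_is_path E \<eta> \<Longrightarrow> wt (path_star_word \<eta>) = binvb G (emb (path_weight G wv we \<eta>))"
proof -
  assume p: "cohn_is_path E \<eta>"
  obtain v es where eta: "\<eta> = (v, es)" by (cases \<eta>)
  show ?thesis
  proof (cases es)
    case Nil
    have v: "v \<in> verts E" using p by (simp add: eta cohn_is_path_def)
    obtain i where "wv v = (i, \<one>\<^bsub>G\<^esub>, i)" using wv_idem[OF v] by auto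
    then show ?thesis using v grp
      by (simp add: eta Nil path_star_word_def path_weight_def wt_single lw_GV monoid.inv_one[OF mon])
  next
    case (Cons a es')
    have sa: "set es \<subseteq> arcs E" using p by (auto simp: eta cohn_is_path_def dest: chain_arcs)
    have "wt (path_star_word \<eta>) = binvb G (wt (path_word \<eta>))"
      using wt_star_edges[OF sa] by (simp add: eta Cons path_star_word_def path_word_def)
    then show ?thesis using wt_pw[OF p] by simp
  qed
qed

lemma wt_monow: "okp \<mu> \<eta> \<Longrightarrow>
    wt (monow \<mu> \<eta>) = emb (brandt_mult G (path_weight G wv we \<mu>) (brandt_inv G (path_weight G wv we \<eta>)))"
  by (simp add: okp_def monow_def wt_append wt_pw wt_psw emb_mult emb_inv)

lemma monow_in_wm: "okp \<mu> \<eta> \<Longrightarrow> wt (monow \<mu> \<eta>) = BEl s \<Longrightarrow> monow \<mu> \<eta> \<in> weighted_monomials E G wv we (Some s)"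
proof -
  assume ok: "okp \<mu> \<eta>" and w: "wt (monow \<mu> \<eta>) = BEl s"
  have "brandt_mult G (path_weight G wv we \<mu>) (brandt_inv G (path_weight G wv we \<eta>)) = Some s"
    using wt_monow[OF ok] w emb_inj[of _ "Some s"] by simp
  then show ?thesis unfolding weighted_monomials_def using ok unfolding okp_def monow_def by blast
qed

lemma wm_props:
  assumes "m \<in> weighted_monomials E G wv we s"
  shows "wt m = emb s" "m \<noteq> []" "set m \<subseteq> cohn_gens E"
proof -
  obtain \<mu> \<eta> where m: "m = monow \<mu> \<eta>" "okp \<mu> \<eta>"
    "brandt_mult G (path_weight G wv we \<mu>) (brandt_inv G (path_weight G wv we \<eta>)) = s"
    using assms unfolding weighted_monomials_def okp_def monow_def by auto
  show "wt m = emb s" using wt_monow[OF m(2)] m by simp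
  show "m \<noteq> []" using m monow_ne by simp
  show "set m \<subseteq> cohn_gens E" using m monow_gens by simp
qed

end


context cctxr begin

lemma chain_wt:
  assumes "cohn_edge_chain E v es" "es \<noteq> []"
  shows "\<exists>i g j. wt (map GE es) = BEl (i, g, j) \<and> wv v = (i, \<one>\<^bsub>G\<^esub>, i) \<and> wv (cohn_path_range E (v, es)) = (j, \<one>\<^bsub>G\<^esub>, j)"
  using assms
proof (induction es arbitrary: v)
  case (Cons a es)
  have a: "a \<in> arcs E" "tail E a = v" "cohn_edge_chain E (head E a) es" using Cons.prems by auto
  obtain i g j where w: "we a = (i, g, j)" "wv (tail E a) = (i, \<one>\<^bsub>G\<^esub>, i)" "wv (head E a) = (j, \<one>\<^bsub>G\<^esub>, j)"
    using we_arc[OF a(1)] by auto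
  show ?case
  proof (cases es)
    case Nil
    then show ?thesis using w a by (simp add: wt_single lw_GE cohn_path_range_def)
  next
    case (Cons b es')
    then obtain i' g' j' where w': "wt (map GE es) = BEl (i', g', j')" "wv (head E a) = (i', \<one>\<^bsub>G\<^esub>, i')"
      "wv (cohn_path_range E (head E a, es)) = (j', \<one>\<^bsub>G\<^esub>, j')"
      using Cons.IH[OF a(3)] by auto
    have "i' = j" using w w' by simp
    then show ?thesis using w w' a by (simp add: wt_Cons lw_GE range_cons)
  qed
qed simp

lemma path_wt:
  assumes "cohn_is_path E \<mu>"
  shows "\<exists>i g j. wt (path_word \<mu>) = BEl (i, g, j) \<and> wv (cohn_path_range E \<mu>) = (j, \<one>\<^bsub>G\<^esub>, j)"
proof -
  obtain v es where mu: "\<mu> = (v, es)" by (cases \<mu>)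
  show ?thesis
  proof (cases es)
    case Nil
    have v: "v \<in> verts E" using assms by (simp add: mu Nil cohn_is_path_def)
    then show ?thesis using wv_idem[OF v] by (auto simp: mu Nil path_word_def wt_single lw_GV cohn_path_range_def)
  next
    case (Cons a es')
    then show ?thesis using chain_wt[of v es] assms by (auto simp: mu cohn_is_path_def path_word_def)
  qed
qed

lemma monow_wt_BEl: "okp \<mu> \<eta> \<Longrightarrow> \<exists>\<sigma>. wt (monow \<mu> \<eta>) = BEl \<sigma>"
proof -
  assume ok: "okp \<mu> \<eta>"
  then have p: "cohn_is_path E \<mu>" "cohn_is_path E \<eta>" "cohn_path_range E \<mu> = cohn_path_range E \<eta>"
    by (auto simp: okp_def)
  obtain i g j where a: "wt (path_word \<mu>) = BEl (i, g, j)" "wv (cohn_path_range E \<mu>) = (j, \<one>\<^bsub>G\<^esub>, j)"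
    using path_wt[OF p(1)] by auto
  obtain i' g' j' where b: "wt (path_word \<eta>) = BEl (i', g', j')" "wv (cohn_path_range E \<eta>) = (j', \<one>\<^bsub>G\<^esub>, j')"
    using path_wt[OF p(2)] by auto
  have "j = j'" using a b p by simp
  moreover have "wt (path_star_word \<eta>) = binvb G (wt (path_word \<eta>))" using wt_psw[OF p(2)] wt_pw[OF p(2)] by simp
  ultimately show ?thesis using a b by (simp add: monow_def wt_append)
qed

definition Cs :: "('i \<times> 'a \<times> 'i) option \<Rightarrow> (('v, 'e) cohn_gen list \<Rightarrow> 'r) set" where
  "Cs s = {f \<in> carrier (cohn_free E). \<forall>w. f w \<noteq> 0 \<longrightarrow> w \<in> weighted_monomials E G wv we s}"

lemma comp_Some: "cohn_component E X G wv we (Some s) = cohn_class E X ` Cs (Some s)"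
  by (simp add: cohn_component_def Cs_def)

lemma I_sum: "finite T \<Longrightarrow> (\<And>t. t \<in> T \<Longrightarrow> F t \<in> II) \<Longrightarrow> (\<lambda>x. \<Sum>t\<in>T. F t x) \<in> II"
proof (induction T rule: finite_induct)
  case empty then show ?case using I_zero by simp
next
  case (insert a T)
  then show ?case using I_add[of "F a" "\<lambda>x. \<Sum>t\<in>T. F t x"] by simp
qed

lemma I_scal: "D \<in> II \<Longrightarrow> (\<lambda>x. r * D x) \<in> II"
  using I_lmult[of D "sc r []"] sc_carrier[of "[]" "cohn_gens E" r] by (simp add: cf const_mult_left)

lemma Cs_zero: "(\<lambda>x. 0) \<in> Cs s"
  by (simp add: Cs_def cf fa_carrier)

lemma Cs_add: "f \<in> Cs s \<Longrightarrow> g \<in> Cs s \<Longrightarrow> (\<lambda>x. f x + g x) \<in> Cs s"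
proof -
  assume f: "f \<in> Cs s" and g: "g \<in> Cs s"
  have "\<forall>w. f w + g w \<noteq> 0 \<longrightarrow> f w \<noteq> 0 \<or> g w \<noteq> 0" by auto
  then show ?thesis using f g by (auto simp: Cs_def cf fa_add_closed)
qed

lemma Cs_neg: "f \<in> Cs s \<Longrightarrow> (\<lambda>x. - f x) \<in> Cs s"
  by (auto simp: Cs_def cf fa_neg_closed)

lemma Cs_scal: "f \<in> Cs s \<Longrightarrow> (\<lambda>x. r * f x) \<in> Cs s"
proof -
  assume f: "f \<in> Cs s"
  have "{x. r * f x \<noteq> 0} \<subseteq> {x. f x \<noteq> 0}" by auto
  moreover have "finite {x. f x \<noteq> 0}" using f by (simp add: Cs_def cf fa_carrier)
  ultimately have "finite {x. r * f x \<noteq> 0}" by (rule finite_subset)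
  moreover have "\<forall>w. r * f w \<noteq> 0 \<longrightarrow> f w \<noteq> 0" by auto
  ultimately show ?thesis using f by (auto simp: Cs_def cf fa_carrier)
qed

lemma Cs_sum: "finite T \<Longrightarrow> (\<And>t. t \<in> T \<Longrightarrow> F t \<in> Cs s) \<Longrightarrow> (\<lambda>x. \<Sum>t\<in>T. F t x) \<in> Cs s"
proof (induction T rule: finite_induct)
  case empty then show ?case using Cs_zero by simp
next
  case (insert a T)
  then show ?case using Cs_add[of "F a" s "\<lambda>x. \<Sum>t\<in>T. F t x"] by simp
qed

lemma Cs_carrier: "f \<in> Cs s \<Longrightarrow> f \<in> carrier (cohn_free E)"
  by (simp add: Cs_def)

lemma Cs_nil: "f \<in> Cs s \<Longrightarrow> f [] = 0"
  using wm_props(2) by (auto simp: Cs_def)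

lemma Cs_wt: "f \<in> Cs s \<Longrightarrow> f w \<noteq> 0 \<Longrightarrow> wt w = emb s"
  using wm_props(1) by (auto simp: Cs_def)

lemma word_Cs: "w \<in> weighted_monomials E G wv we s \<Longrightarrow> word_elem w \<in> Cs s"
  using wm_props(3)[of w s] word_carrier[of w] by (auto simp: Cs_def word_elem_def)

lemma comp_word:
  assumes "set w \<subseteq> cohn_gens E" "w \<noteq> []" "wt w = BEl \<sigma>"
  shows "\<exists>g \<in> Cs (Some \<sigma>). (\<lambda>x. word_elem w x - g x) \<in> II"
proof -
  from reduce[OF assms(2,1)] show ?thesis
  proof
    assume "zerI II w"
    then show ?thesis using Cs_zero by (intro bexI[of _ "\<lambda>x. 0"]) (auto simp: zerI_def)
  next
    assume "\<exists>\<mu> \<eta>. okp \<mu> \<eta> \<and> eqvI II w (monow \<mu> \<eta>)"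
    then obtain \<mu> \<eta> where ok: "okp \<mu> \<eta>" and e: "eqvI II w (monow \<mu> \<eta>)" by auto
    show ?thesis
    proof (cases "wt (monow \<mu> \<eta>) = wt w")
      case True
      then have "monow \<mu> \<eta> \<in> weighted_monomials E G wv we (Some \<sigma>)" using monow_in_wm[OF ok] assms(3) by simp
      then show ?thesis using e word_Cs by (auto simp: eqvI_def)
    next
      case False
      then have "wt w \<noteq> wt (monow \<mu> \<eta>)" by simp
      then have "word_elem w \<in> II" using diff_weight_in_I[OF e[unfolded eqvI_def]] by simp
      then show ?thesis using Cs_zero by (intro bexI[of _ "\<lambda>x. 0"]) auto
    qed
  qed
qed

lemma zero_word:
  assumes "set w \<subseteq> cohn_gens E" "w \<noteq> []" "wt w = BZero"
  shows "word_elem w \<in> II"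
proof -
  from reduce[OF assms(2,1)] show ?thesis
  proof
    assume "\<exists>\<mu> \<eta>. okp \<mu> \<eta> \<and> eqvI II w (monow \<mu> \<eta>)"
    then obtain \<mu> \<eta> where ok: "okp \<mu> \<eta>" and e: "eqvI II w (monow \<mu> \<eta>)" by auto
    obtain \<sigma> where "wt (monow \<mu> \<eta>) = BEl \<sigma>" using monow_wt_BEl[OF ok] by auto
    then have "wt w \<noteq> wt (monow \<mu> \<eta>)" using assms(3) by simp
    then show ?thesis using diff_weight_in_I[OF e[unfolded eqvI_def]] by simp
  qed (simp add: zerI_def)
qed

lemma fa_decomp_pt:
  assumes "f \<in> carrier (cohn_free E)"
  shows "f = (\<lambda>x. \<Sum>w\<in>{w. f w \<noteq> 0}. f w * word_elem w x)"
proof (rule ext)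
  fix x
  have fin: "finite {w. f w \<noteq> 0}" using assms by (simp add: cf fa_carrier)
  have "(\<Sum>w\<in>{w. f w \<noteq> 0}. f w * word_elem w x) = (\<Sum>w\<in>{w. f w \<noteq> 0}. if w = x then f x else 0)"
    by (rule sum.cong) (auto simp: word_elem_def)
  also have "\<dots> = f x" using fin by (simp add: sum.delta)
  finally show "f x = (\<Sum>w\<in>{w. f w \<noteq> 0}. f w * word_elem w x)" by simp
qed

lemma class_in_comp:
  assumes f: "f \<in> carrier (cohn_free E)" and wf: "\<forall>w. f w \<noteq> 0 \<longrightarrow> wt w = BEl \<sigma>"
  shows "\<exists>g \<in> Cs (Some \<sigma>). (\<lambda>x. f x - g x) \<in> II"
proof -
  let ?S = "{w. f w \<noteq> 0}"
  have fin: "finite ?S" using f by (simp add: cf fa_carrier)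
  have "\<forall>w\<in>?S. \<exists>g \<in> Cs (Some \<sigma>). (\<lambda>x. word_elem w x - g x) \<in> II"
  proof
    fix w assume w: "w \<in> ?S"
    have "set w \<subseteq> cohn_gens E" using f w by (auto simp: cf fa_carrier)
    moreover have "w \<noteq> []" using wf w by fastforce
    ultimately show "\<exists>g \<in> Cs (Some \<sigma>). (\<lambda>x. word_elem w x - g x) \<in> II" using comp_word wf w by auto
  qed
  then obtain gg where gg: "\<And>w. w \<in> ?S \<Longrightarrow> gg w \<in> Cs (Some \<sigma>) \<and> (\<lambda>x. word_elem w x - gg w x) \<in> II"
    by metis
  let ?g = "\<lambda>x. \<Sum>w\<in>?S. f w * gg w x"
  have "?g \<in> Cs (Some \<sigma>)" using gg by (intro Cs_sum[OF fin] Cs_scal) auto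
  moreover have "(\<lambda>x. f x - ?g x) = (\<lambda>x. \<Sum>w\<in>?S. f w * (word_elem w x - gg w x))"
  proof (rule ext)
    fix x
    have "f x = (\<Sum>w\<in>?S. f w * word_elem w x)" by (subst fa_decomp_pt[OF f]) simp
    then show "f x - ?g x = (\<Sum>w\<in>?S. f w * (word_elem w x - gg w x))"
      by (simp add: right_diff_distrib sum_subtractf)
  qed
  moreover have "(\<lambda>x. \<Sum>w\<in>?S. f w * (word_elem w x - gg w x)) \<in> II"
    using gg by (intro I_sum[OF fin]) (auto intro: I_scal)
  ultimately show ?thesis by (intro bexI[of _ ?g]) simp_all
qed

lemma zero_in_I:
  assumes f: "f \<in> carrier (cohn_free E)" and wf: "\<forall>w. f w \<noteq> 0 \<longrightarrow> wt w = BZero"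
  shows "f \<in> II"
proof -
  let ?S = "{w. f w \<noteq> 0}"
  have fin: "finite ?S" using f by (simp add: cf fa_carrier)
  have "(\<lambda>x. \<Sum>w\<in>?S. f w * word_elem w x) \<in> II"
  proof (intro I_sum[OF fin] I_scal)
    fix w assume w: "w \<in> ?S"
    have "set w \<subseteq> cohn_gens E" using f w by (auto simp: cf fa_carrier)
    moreover have "w \<noteq> []" using wf w by fastforce
    ultimately show "word_elem w \<in> II" using zero_word wf w by auto
  qed
  then show ?thesis using fa_decomp_pt[OF f] by simp
qed

end


fun gst :: "('v, 'e) cohn_gen \<Rightarrow> ('v, 'e) cohn_gen" where
  "gst (GV v) = GV v" | "gst (GE a) = GS a" | "gst (GS a) = GE a"

lemma gst_gst[simp]: "gst (gst x) = x" by (cases x) auto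

definition wstar :: "('v, 'e) cohn_gen list \<Rightarrow> ('v, 'e) cohn_gen list" where
  "wstar w = rev (map gst w)"

lemma wstar_wstar[simp]: "wstar (wstar w) = w"
  by (simp add: wstar_def rev_map comp_def)

lemma wstar_eq_iff: "wstar x = y \<longleftrightarrow> x = wstar y"
  by (metis wstar_wstar)

lemma wstar_append: "wstar (u @ v) = wstar v @ wstar u"
  by (simp add: wstar_def)

lemma length_wstar[simp]: "length (wstar w) = length w"
  by (simp add: wstar_def)

lemma take_wstar: "take k (wstar w) = wstar (drop (length w - k) w)"
  by (simp add: wstar_def take_rev drop_map)

lemma drop_wstar: "drop k (wstar w) = wstar (take (length w - k) w)"
  by (simp add: wstar_def drop_rev take_map)

lemma wstar_Nil[simp]: "wstar [] = []" by (simp add: wstar_def)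

lemma wstar_inj: "wstar x = wstar y \<Longrightarrow> x = y"
  by (metis wstar_wstar)

definition fstar :: "(('v, 'e) cohn_gen list \<Rightarrow> 'r) \<Rightarrow> (('v, 'e) cohn_gen list \<Rightarrow> 'r)" where
  "fstar f = (\<lambda>w. f (wstar w))"

lemma fstar_fstar[simp]: "fstar (fstar f) = f"
  by (simp add: fstar_def)

lemma word_wstar: "word_elem u (wstar w) = word_elem (wstar u) w"
  by (auto simp: word_elem_def wstar_eq_iff)

lemma ww1: "word_elem [GE a, GS a] (wstar w) = word_elem [GE a, GS a] w"
  using word_wstar[of "[GE a, GS a]"] by (simp add: wstar_def)
lemma ww2: "word_elem [GV v] (wstar w) = word_elem [GV v] w"
  using word_wstar[of "[GV v]"] by (simp add: wstar_def)

lemma fstar_word: "fstar (word_elem u) = word_elem (wstar u)"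
  by (auto simp: fstar_def word_elem_def wstar_eq_iff fun_eq_iff)

context cctxr begin

lemma gst_gens: "x \<in> cohn_gens E \<Longrightarrow> gst x \<in> cohn_gens E"
  by (cases x) (auto simp: cohn_gens_def)

lemma wstar_gens: "set w \<subseteq> cohn_gens E \<Longrightarrow> set (wstar w) \<subseteq> cohn_gens E"
  by (auto simp: wstar_def gst_gens)

lemma fstar_carrier:
  assumes "f \<in> carrier (cohn_free E)"
  shows "fstar f \<in> carrier (cohn_free E)"
proof -
  have "{w. fstar f w \<noteq> 0} = wstar ` {w. f w \<noteq> 0}"
    by (auto simp: fstar_def image_iff intro: exI[of _ "wstar _"]) (metis wstar_wstar)
  moreover have "finite {w. f w \<noteq> 0}" using assms by (simp add: cf fa_carrier)
  ultimately have "finite {w. fstar f w \<noteq> 0}" by simp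
  moreover have "\<forall>w. fstar f w \<noteq> 0 \<longrightarrow> set w \<subseteq> cohn_gens E"
    using assms wstar_gens[of "wstar _"] by (auto simp: cf fa_carrier fstar_def)
  ultimately show ?thesis by (simp add: cf fa_carrier)
qed

lemma fstar_diff: "fstar (\<lambda>w. word_elem A w - word_elem B w) = (\<lambda>w. word_elem (wstar A) w - word_elem (wstar B) w)"
  by (simp add: fstar_def fun_eq_iff word_wstar)

lemma fstar_rel:
  assumes "r \<in> cohn_relations E X"
  shows "fstar r \<in> cohn_relations E X"
  using assms unfolding cohn_relations_def
proof (elim UnE CollectE exE conjE)
  fix v v' assume r: "r = (\<lambda>w. word_elem [GV v, GV v'] w - (if v = v' then word_elem [GV v] w else 0))"
    and vv: "v \<in> verts E" "v' \<in> verts E"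
  have "fstar r = (\<lambda>w. word_elem [GV v', GV v] w - (if v' = v then word_elem [GV v'] w else 0))"
    using fstar_word[of "[GV v, GV v']"] fstar_word[of "[GV v]"]
    by (auto simp: r fstar_def fun_eq_iff wstar_def)
  then show "fstar r \<in> {\<lambda>w. word_elem [GV v, GV v'] w - (if v = v' then word_elem [GV v] w else 0) |v v'. v \<in> verts E \<and> v' \<in> verts E} \<union>
    {\<lambda>w. word_elem [GV (tail E a), GE a] w - word_elem [GE a] w |a. a \<in> arcs E} \<union>
    {\<lambda>w. word_elem [GE a, GV (head E a)] w - word_elem [GE a] w |a. a \<in> arcs E} \<union>
    {\<lambda>w. word_elem [GV (head E a), GS a] w - word_elem [GS a] w |a. a \<in> arcs E} \<union>
    {\<lambda>w. word_elem [GS a, GV (tail E a)] w - word_elem [GS a] w |a. a \<in> arcs E} \<union>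
    {\<lambda>w. word_elem [GS a, GE a'] w - (if a = a' then word_elem [GV (head E a)] w else 0) |a a'. a \<in> arcs E \<and> a' \<in> arcs E} \<union>
    {\<lambda>w. (\<Sum>a\<in>out_arcs E v. word_elem [GE a, GS a] w) - word_elem [GV v] w |v. v \<in> X}"
    using vv by blast
next
  fix a assume r: "r = (\<lambda>w. word_elem [GV (tail E a), GE a] w - word_elem [GE a] w)" and a: "a \<in> arcs E"
  have "fstar r = (\<lambda>w. word_elem [GS a, GV (tail E a)] w - word_elem [GS a] w)"
    by (simp add: r fstar_diff wstar_def)
  then show "fstar r \<in> {\<lambda>w. word_elem [GV v, GV v'] w - (if v = v' then word_elem [GV v] w else 0) |v v'. v \<in> verts E \<and> v' \<in> verts E} \<union>
    {\<lambda>w. word_elem [GV (tail E a), GE a] w - word_elem [GE a] w |a. a \<in> arcs E} \<union>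
    {\<lambda>w. word_elem [GE a, GV (head E a)] w - word_elem [GE a] w |a. a \<in> arcs E} \<union>
    {\<lambda>w. word_elem [GV (head E a), GS a] w - word_elem [GS a] w |a. a \<in> arcs E} \<union>
    {\<lambda>w. word_elem [GS a, GV (tail E a)] w - word_elem [GS a] w |a. a \<in> arcs E} \<union>
    {\<lambda>w. word_elem [GS a, GE a'] w - (if a = a' then word_elem [GV (head E a)] w else 0) |a a'. a \<in> arcs E \<and> a' \<in> arcs E} \<union>
    {\<lambda>w. (\<Sum>a\<in>out_arcs E v. word_elem [GE a, GS a] w) - word_elem [GV v] w |v. v \<in> X}"
    using a by blast
next
  fix a assume r: "r = (\<lambda>w. word_elem [GE a, GV (head E a)] w - word_elem [GE a] w)" and a: "a \<in> arcs E"
  have "fstar r = (\<lambda>w. word_elem [GV (head E a), GS a] w - word_elem [GS a] w)"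
    by (simp add: r fstar_diff wstar_def)
  then show "fstar r \<in> {\<lambda>w. word_elem [GV v, GV v'] w - (if v = v' then word_elem [GV v] w else 0) |v v'. v \<in> verts E \<and> v' \<in> verts E} \<union>
    {\<lambda>w. word_elem [GV (tail E a), GE a] w - word_elem [GE a] w |a. a \<in> arcs E} \<union>
    {\<lambda>w. word_elem [GE a, GV (head E a)] w - word_elem [GE a] w |a. a \<in> arcs E} \<union>
    {\<lambda>w. word_elem [GV (head E a), GS a] w - word_elem [GS a] w |a. a \<in> arcs E} \<union>
    {\<lambda>w. word_elem [GS a, GV (tail E a)] w - word_elem [GS a] w |a. a \<in> arcs E} \<union>
    {\<lambda>w. word_elem [GS a, GE a'] w - (if a = a' then word_elem [GV (head E a)] w else 0) |a a'. a \<in> arcs E \<and> a' \<in> arcs E} \<union>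
    {\<lambda>w. (\<Sum>a\<in>out_arcs E v. word_elem [GE a, GS a] w) - word_elem [GV v] w |v. v \<in> X}"
    using a by blast
next
  fix a assume r: "r = (\<lambda>w. word_elem [GV (head E a), GS a] w - word_elem [GS a] w)" and a: "a \<in> arcs E"
  have "fstar r = (\<lambda>w. word_elem [GE a, GV (head E a)] w - word_elem [GE a] w)"
    by (simp add: r fstar_diff wstar_def)
  then show "fstar r \<in> {\<lambda>w. word_elem [GV v, GV v'] w - (if v = v' then word_elem [GV v] w else 0) |v v'. v \<in> verts E \<and> v' \<in> verts E} \<union>
    {\<lambda>w. word_elem [GV (tail E a), GE a] w - word_elem [GE a] w |a. a \<in> arcs E} \<union>
    {\<lambda>w. word_elem [GE a, GV (head E a)] w - word_elem [GE a] w |a. a \<in> arcs E} \<union>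
    {\<lambda>w. word_elem [GV (head E a), GS a] w - word_elem [GS a] w |a. a \<in> arcs E} \<union>
    {\<lambda>w. word_elem [GS a, GV (tail E a)] w - word_elem [GS a] w |a. a \<in> arcs E} \<union>
    {\<lambda>w. word_elem [GS a, GE a'] w - (if a = a' then word_elem [GV (head E a)] w else 0) |a a'. a \<in> arcs E \<and> a' \<in> arcs E} \<union>
    {\<lambda>w. (\<Sum>a\<in>out_arcs E v. word_elem [GE a, GS a] w) - word_elem [GV v] w |v. v \<in> X}"
    using a by blast
next
  fix a assume r: "r = (\<lambda>w. word_elem [GS a, GV (tail E a)] w - word_elem [GS a] w)" and a: "a \<in> arcs E"
  have "fstar r = (\<lambda>w. word_elem [GV (tail E a), GE a] w - word_elem [GE a] w)"
    by (simp add: r fstar_diff wstar_def)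
  then show "fstar r \<in> {\<lambda>w. word_elem [GV v, GV v'] w - (if v = v' then word_elem [GV v] w else 0) |v v'. v \<in> verts E \<and> v' \<in> verts E} \<union>
    {\<lambda>w. word_elem [GV (tail E a), GE a] w - word_elem [GE a] w |a. a \<in> arcs E} \<union>
    {\<lambda>w. word_elem [GE a, GV (head E a)] w - word_elem [GE a] w |a. a \<in> arcs E} \<union>
    {\<lambda>w. word_elem [GV (head E a), GS a] w - word_elem [GS a] w |a. a \<in> arcs E} \<union>
    {\<lambda>w. word_elem [GS a, GV (tail E a)] w - word_elem [GS a] w |a. a \<in> arcs E} \<union>
    {\<lambda>w. word_elem [GS a, GE a'] w - (if a = a' then word_elem [GV (head E a)] w else 0) |a a'. a \<in> arcs E \<and> a' \<in> arcs E} \<union>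
    {\<lambda>w. (\<Sum>a\<in>out_arcs E v. word_elem [GE a, GS a] w) - word_elem [GV v] w |v. v \<in> X}"
    using a by blast
next
  fix a a' assume r: "r = (\<lambda>w. word_elem [GS a, GE a'] w - (if a = a' then word_elem [GV (head E a)] w else 0))"
    and a: "a \<in> arcs E" "a' \<in> arcs E"
  have "fstar r = (\<lambda>w. word_elem [GS a', GE a] w - (if a' = a then word_elem [GV (head E a')] w else 0))"
    using fstar_word[of "[GS a, GE a']"] fstar_word[of "[GV (head E a)]"]
    by (auto simp: r fstar_def fun_eq_iff wstar_def)
  then show "fstar r \<in> {\<lambda>w. word_elem [GV v, GV v'] w - (if v = v' then word_elem [GV v] w else 0) |v v'. v \<in> verts E \<and> v' \<in> verts E} \<union>
    {\<lambda>w. word_elem [GV (tail E a), GE a] w - word_elem [GE a] w |a. a \<in> arcs E} \<union>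
    {\<lambda>w. word_elem [GE a, GV (head E a)] w - word_elem [GE a] w |a. a \<in> arcs E} \<union>
    {\<lambda>w. word_elem [GV (head E a), GS a] w - word_elem [GS a] w |a. a \<in> arcs E} \<union>
    {\<lambda>w. word_elem [GS a, GV (tail E a)] w - word_elem [GS a] w |a. a \<in> arcs E} \<union>
    {\<lambda>w. word_elem [GS a, GE a'] w - (if a = a' then word_elem [GV (head E a)] w else 0) |a a'. a \<in> arcs E \<and> a' \<in> arcs E} \<union>
    {\<lambda>w. (\<Sum>a\<in>out_arcs E v. word_elem [GE a, GS a] w) - word_elem [GV v] w |v. v \<in> X}"
    using a by blast
next
  fix v assume r: "r = (\<lambda>w. (\<Sum>a\<in>out_arcs E v. word_elem [GE a, GS a] w) - word_elem [GV v] w)" and v: "v \<in> X"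
  have "fstar r = r" by (simp add: r fstar_def ww1 ww2)
  then show "fstar r \<in> {\<lambda>w. word_elem [GV v, GV v'] w - (if v = v' then word_elem [GV v] w else 0) |v v'. v \<in> verts E \<and> v' \<in> verts E} \<union>
    {\<lambda>w. word_elem [GV (tail E a), GE a] w - word_elem [GE a] w |a. a \<in> arcs E} \<union>
    {\<lambda>w. word_elem [GE a, GV (head E a)] w - word_elem [GE a] w |a. a \<in> arcs E} \<union>
    {\<lambda>w. word_elem [GV (head E a), GS a] w - word_elem [GS a] w |a. a \<in> arcs E} \<union>
    {\<lambda>w. word_elem [GS a, GV (tail E a)] w - word_elem [GS a] w |a. a \<in> arcs E} \<union>
    {\<lambda>w. word_elem [GS a, GE a'] w - (if a = a' then word_elem [GV (head E a)] w else 0) |a a'. a \<in> arcs E \<and> a' \<in> arcs E} \<union>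
    {\<lambda>w. (\<Sum>a\<in>out_arcs E v. word_elem [GE a, GS a] w) - word_elem [GV v] w |v. v \<in> X}"
    using v r by blast
qed

end


lemma wstar_pw: "wstar (path_word \<mu>) = path_star_word \<mu>"
  by (simp add: wstar_def path_word_def path_star_word_def rev_map)
lemma wstar_psw: "wstar (path_star_word \<mu>) = path_word \<mu>"
  by (metis wstar_pw wstar_wstar)

lemma wstar_monow: "wstar (monow \<mu> \<eta>) = monow \<eta> \<mu>"
  by (simp add: monow_def wstar_append wstar_pw wstar_psw)

context cctxr begin

lemma star_ideal:
  assumes "h \<in> II"
  shows "fstar h \<in> II"
proof -
  define J where "J = {h \<in> carrier (cohn_free E). fstar (h :: ('v, 'e) cohn_gen list \<Rightarrow> 'r) \<in> II}"
  have "ideal J (free_algebra (cohn_gens E))"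
  proof (rule fa_ideal_crit)
    show "J \<subseteq> carrier (free_algebra (cohn_gens E))" by (auto simp: J_def cf)
    show "(\<lambda>w. 0) \<in> J" using I_zero by (auto simp: J_def fstar_def cf fa_carrier)
  next
    fix a b assume "a \<in> J" "b \<in> J"
    then show "(\<lambda>w. a w + b w) \<in> J"
      using I_add[of "fstar a" "fstar b"] by (auto simp: J_def cf fa_add_closed fstar_def)
  next
    fix a assume "a \<in> J"
    then show "(\<lambda>w. - a w) \<in> J"
      using I_neg[of "fstar a"] by (auto simp: J_def cf fa_neg_closed fstar_def)
  next
    fix a r u assume a: "a \<in> J" and u: "set u \<subseteq> cohn_gens E"
    have car: "sc r u \<otimes>\<^bsub>free_algebra (cohn_gens E)\<^esub> a \<in> carrier (free_algebra (cohn_gens E))"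
      unfolding fa_mult by (rule fa_mult_closed) (use a u in \<open>auto simp: J_def cf intro: sc_carrier\<close>)
    have eq: "fstar (sc r u \<otimes>\<^bsub>free_algebra (cohn_gens E)\<^esub> a) = (\<lambda>x. r * fstar a x) \<otimes>\<^bsub>free_algebra (cohn_gens E)\<^esub> sc 1 (wstar u)"
    proof (rule ext)
      fix w
      show "fstar (sc r u \<otimes>\<^bsub>free_algebra (cohn_gens E)\<^esub> a) w = ((\<lambda>x. r * fstar a x) \<otimes>\<^bsub>free_algebra (cohn_gens E)\<^esub> sc 1 (wstar u)) w"
        unfolding fstar_def sc_mult_left_pt sc_mult_right_pt
        by (auto simp: take_wstar drop_wstar wstar_eq_iff)
    qed
    have "(\<lambda>x. r * fstar a x) \<in> II" using a I_scal by (auto simp: J_def)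
    then have "(\<lambda>x. r * fstar a x) \<otimes>\<^bsub>cohn_free E\<^esub> sc 1 (wstar u) \<in> II"
      using I_rmult[of "\<lambda>x. r * fstar a x" "sc 1 (wstar u)"] sc_carrier[OF wstar_gens[OF u], of 1] by (simp add: cf)
    then show "sc r u \<otimes>\<^bsub>free_algebra (cohn_gens E)\<^esub> a \<in> J" using car eq by (simp add: J_def cf)
  next
    fix a r u assume a: "a \<in> J" and u: "set u \<subseteq> cohn_gens E"
    have car: "a \<otimes>\<^bsub>free_algebra (cohn_gens E)\<^esub> sc r u \<in> carrier (free_algebra (cohn_gens E))"
      unfolding fa_mult by (rule fa_mult_closed) (use a u in \<open>auto simp: J_def cf intro: sc_carrier\<close>)
    have eq: "fstar (a \<otimes>\<^bsub>free_algebra (cohn_gens E)\<^esub> sc r u) = sc 1 (wstar u) \<otimes>\<^bsub>free_algebra (cohn_gens E)\<^esub> (\<lambda>x. fstar a x * r)"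
    proof (rule ext)
      fix w
      show "fstar (a \<otimes>\<^bsub>free_algebra (cohn_gens E)\<^esub> sc r u) w = (sc 1 (wstar u) \<otimes>\<^bsub>free_algebra (cohn_gens E)\<^esub> (\<lambda>x. fstar a x * r)) w"
        unfolding fstar_def sc_mult_left_pt sc_mult_right_pt
        by (auto simp: take_wstar drop_wstar wstar_eq_iff)
    qed
    have "(\<lambda>x. fstar a x * r) \<in> II"
      using a I_rmult[of "fstar a" "sc r []"] sc_carrier[of "[]" "cohn_gens E" r] by (auto simp: J_def cf const_mult_right)
    then have "sc 1 (wstar u) \<otimes>\<^bsub>cohn_free E\<^esub> (\<lambda>x. fstar a x * r) \<in> II"
      using I_lmult[of "\<lambda>x. fstar a x * r" "sc 1 (wstar u)"] sc_carrier[OF wstar_gens[OF u], of 1] by (simp add: cf)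
    then show "a \<otimes>\<^bsub>free_algebra (cohn_gens E)\<^esub> sc r u \<in> J" using car eq by (simp add: J_def cf)
  qed
  then have idJ: "ideal J (cohn_free E)" by (simp add: cf)
  have "cohn_relations E X \<subseteq> J"
    using rels_carrier rel_in_I fstar_rel by (auto simp: J_def)
  then have "cohn_ideal E X \<subseteq> J"
    unfolding cohn_ideal_def by (rule ring.genideal_minimal[OF ring_F idJ])
  then show ?thesis using assms by (auto simp: J_def)
qed

lemma wm_star:
  assumes "m \<in> weighted_monomials E G wv we s"
  shows "wstar m \<in> weighted_monomials E G wv we (brandt_inv G s)"
proof -
  obtain \<mu> \<eta> where m: "m = monow \<mu> \<eta>" "okp \<mu> \<eta>"
    "brandt_mult G (path_weight G wv we \<mu>) (brandt_inv G (path_weight G wv we \<eta>)) = s"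
    using assms unfolding weighted_monomials_def okp_def monow_def by auto
  have ok: "okp \<eta> \<mu>" using m(2) by (auto simp: okp_def)
  have g1: "good G I (emb (path_weight G wv we \<mu>))" using wt_pw[of \<mu>] good_wt m(2) by (metis okp_def)
  have g2: "good G I (emb (path_weight G wv we \<eta>))" using wt_pw[of \<eta>] good_wt m(2) by (metis okp_def)
  have "emb (brandt_inv G s) = emb (brandt_mult G (path_weight G wv we \<eta>) (brandt_inv G (path_weight G wv we \<mu>)))"
    using m(3) binvb_bmul[OF grp g1 good_binvb[OF grp g2]] binvb_binvb[OF grp g2]
    by (auto simp: emb_mult emb_inv)
  then have "brandt_mult G (path_weight G wv we \<eta>) (brandt_inv G (path_weight G wv we \<mu>)) = brandt_inv G s"
    using emb_inj by metis
  then show ?thesis using ok unfolding m(1) wstar_monow unfolding weighted_monomials_def okp_def monow_def by blast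
qed

lemma Cs_star: "f \<in> Cs s \<Longrightarrow> fstar f \<in> Cs (brandt_inv G s)"
  using fstar_carrier wm_star by (fastforce simp: Cs_def fstar_def)

end


fun unemb :: "('i \<times> 'a \<times> 'i) bw \<Rightarrow> ('i \<times> 'a \<times> 'i) option" where
  "unemb (BEl x) = Some x" | "unemb _ = None"

context cctxr begin

abbreviation QQ where "QQ \<equiv> (cohn_free E Quot II)"
abbreviation AA where "AA \<equiv> (cohn_path_algebra E X :: (('v, 'e) cohn_gen list \<Rightarrow> 'r) set ring)"
abbreviation RS where "RS \<equiv> (cohn_component E X G wv we :: _ \<Rightarrow> (('v, 'e) cohn_gen list \<Rightarrow> 'r) set set)"
abbreviation cl where "cl f \<equiv> cohn_class E X (f :: ('v, 'e) cohn_gen list \<Rightarrow> 'r)"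

lemma qring: "ring QQ" by (rule ideal.quotient_is_ring[OF ideal_I])
lemma hom: "(+>\<^bsub>cohn_free E\<^esub>) II \<in> ring_hom (cohn_free E) QQ" by (rule ideal.rcos_ring_hom[OF ideal_I])

lemma A_carrier: "carrier AA = cl ` {f \<in> carrier (cohn_free E). f [] = 0}"
  by (simp add: cohn_path_algebra_def)
lemma A_add: "x \<oplus>\<^bsub>AA\<^esub> y = x \<oplus>\<^bsub>QQ\<^esub> y" by (simp add: cohn_path_algebra_def)
lemma A_mult: "x \<otimes>\<^bsub>AA\<^esub> y = x \<otimes>\<^bsub>QQ\<^esub> y" by (simp add: cohn_path_algebra_def)
lemma A_zero: "\<zero>\<^bsub>AA\<^esub> = II" by (simp add: cohn_path_algebra_def FactRing_def)
lemma Q_zero: "\<zero>\<^bsub>QQ\<^esub> = II" by (simp add: FactRing_def)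
lemma AQ_zero: "\<zero>\<^bsub>AA\<^esub> = \<zero>\<^bsub>QQ\<^esub>" by (simp add: A_zero Q_zero)

lemma cl_closed: "f \<in> carrier (cohn_free E) \<Longrightarrow> cl f \<in> carrier QQ"
  using ring_hom_closed[OF hom] by (simp add: cohn_class_def)

lemma cl_add: "f \<in> carrier (cohn_free E) \<Longrightarrow> g \<in> carrier (cohn_free E) \<Longrightarrow> cl f \<oplus>\<^bsub>AA\<^esub> cl g = cl (\<lambda>w. f w + g w)"
  using ring_hom_add[OF hom] by (simp add: A_add cohn_class_def cf fa_add)

lemma cl_mult: "f \<in> carrier (cohn_free E) \<Longrightarrow> g \<in> carrier (cohn_free E) \<Longrightarrow> cl f \<otimes>\<^bsub>AA\<^esub> cl g = cl (f \<otimes>\<^bsub>cohn_free E\<^esub> g)"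
  using ring_hom_mult[OF hom] by (simp add: A_mult cohn_class_def)

lemma cl_in_I: "f \<in> II \<Longrightarrow> cl f = II"
proof -
  assume f: "f \<in> II"
  interpret I: ideal II "cohn_free E" by (rule ideal_I)
  show ?thesis using I.a_rcos_const[OF f] by (simp add: cohn_class_def)
qed

lemma cl_zero: "cl (\<lambda>w. 0) = II" by (rule cl_in_I[OF I_zero])

lemma cl_zero_iff: "f \<in> carrier (cohn_free E) \<Longrightarrow> cl f = II \<Longrightarrow> f \<in> II"
proof -
  assume f: "f \<in> carrier (cohn_free E)" and e: "cl f = II"
  interpret I: ideal II "cohn_free E" by (rule ideal_I)
  have "f \<in> II +>\<^bsub>cohn_free E\<^esub> f" using I.a_rcos_self f by simp
  then show ?thesis using e by (simp add: cohn_class_def)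
qed

lemma cl_eq: "f \<in> carrier (cohn_free E) \<Longrightarrow> g \<in> carrier (cohn_free E) \<Longrightarrow> (\<lambda>w. f w - g w) \<in> II \<Longrightarrow> cl f = cl g"
proof -
  assume f: "f \<in> carrier (cohn_free E)" and g: "g \<in> carrier (cohn_free E)" and d: "(\<lambda>w. f w - g w) \<in> II"
  interpret I: ideal II "cohn_free E" by (rule ideal_I)
  have m: "f \<ominus>\<^bsub>cohn_free E\<^esub> g = (\<lambda>w. f w - g w)"
    using f g unfolding cf by (rule fa_minus)
  have "f \<ominus>\<^bsub>cohn_free E\<^esub> g \<in> II" unfolding m by (rule d)
  then have "f \<in> II +>\<^bsub>cohn_free E\<^esub> g" using I.a_rcos_module_minus[OF ring_F g f] by blast
  then have "II +>\<^bsub>cohn_free E\<^esub> g = II +>\<^bsub>cohn_free E\<^esub> f" by (rule I.a_repr_independence'[OF _ g])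
  then show ?thesis unfolding cohn_class_def by (rule sym)
qed

lemma carrier_sub: "carrier AA \<subseteq> carrier QQ"
proof
  fix x assume "x \<in> carrier AA"
  then obtain f where "x = cl f" "f \<in> carrier (cohn_free E)" unfolding A_carrier by blast
  then show "x \<in> carrier QQ" using cl_closed by blast
qed

lemma zero_A_carrier: "II \<in> carrier AA"
proof -
  have "(\<lambda>w. 0) \<in> {f \<in> carrier (cohn_free E). f [] = (0::'r)}" by (simp add: cf fa_carrier)
  then have "cl (\<lambda>w. 0) \<in> carrier AA" unfolding A_carrier by (rule imageI)
  then show ?thesis unfolding cl_zero .
qed

lemma agA: "abelian_group AA"
proof -
  interpret Q: ring QQ by (rule qring)
  show ?thesis
  proof (rule abelian_groupI)
    fix x y assume x: "x \<in> carrier AA" and y: "y \<in> carrier AA"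
    obtain f where f: "x = cl f" "f \<in> carrier (cohn_free E)" "f [] = 0" using x by (auto simp: A_carrier)
    obtain g where g: "y = cl g" "g \<in> carrier (cohn_free E)" "g [] = 0" using y by (auto simp: A_carrier)
    have "(\<lambda>w. f w + g w) \<in> carrier (cohn_free E)" using f g fa_add_closed by (simp add: cf)
    then show "x \<oplus>\<^bsub>AA\<^esub> y \<in> carrier AA" using f g cl_add by (auto simp: A_carrier)
  next
    show "\<zero>\<^bsub>AA\<^esub> \<in> carrier AA" using zero_A_carrier A_zero by simp
  next
    fix x y z assume "x \<in> carrier AA" "y \<in> carrier AA" "z \<in> carrier AA"
    then have "x \<in> carrier QQ" "y \<in> carrier QQ" "z \<in> carrier QQ" using carrier_sub by auto
    then show "x \<oplus>\<^bsub>AA\<^esub> y \<oplus>\<^bsub>AA\<^esub> z = x \<oplus>\<^bsub>AA\<^esub> (y \<oplus>\<^bsub>AA\<^esub> z)"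
      unfolding A_add by (rule Q.a_assoc)
  next
    fix x y assume "x \<in> carrier AA" "y \<in> carrier AA"
    then have "x \<in> carrier QQ" "y \<in> carrier QQ" using carrier_sub by auto
    then show "x \<oplus>\<^bsub>AA\<^esub> y = y \<oplus>\<^bsub>AA\<^esub> x" unfolding A_add by (rule Q.a_comm)
  next
    fix x assume "x \<in> carrier AA"
    then have "x \<in> carrier QQ" using carrier_sub by auto
    then show "\<zero>\<^bsub>AA\<^esub> \<oplus>\<^bsub>AA\<^esub> x = x" unfolding A_add AQ_zero by (rule Q.l_zero)
  next
    fix x assume x: "x \<in> carrier AA"
    obtain f where f: "x = cl f" "f \<in> carrier (cohn_free E)" "f [] = 0" using x by (auto simp: A_carrier)
    have n: "(\<lambda>w. - f w) \<in> carrier (cohn_free E)" using f fa_neg_closed by (simp add: cf)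
    have "cl (\<lambda>w. - f w) \<in> carrier AA" using n f by (auto simp: A_carrier)
    moreover have "cl (\<lambda>w. - f w) \<oplus>\<^bsub>AA\<^esub> x = \<zero>\<^bsub>AA\<^esub>" using cl_add[OF n f(2)] f cl_zero by (simp add: A_zero)
    ultimately show "\<exists>y\<in>carrier AA. y \<oplus>\<^bsub>AA\<^esub> x = \<zero>\<^bsub>AA\<^esub>" by blast
  qed
qed

lemma A_inv: "f \<in> carrier (cohn_free E) \<Longrightarrow> f [] = 0 \<Longrightarrow> \<ominus>\<^bsub>AA\<^esub> (cl f) = cl (\<lambda>w. - f w)"
proof -
  assume f: "f \<in> carrier (cohn_free E)" "f [] = 0"
  have n: "(\<lambda>w. - f w) \<in> carrier (cohn_free E)" using f fa_neg_closed by (simp add: cf)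
  show ?thesis
  proof (rule abelian_group.minus_equality[OF agA])
    show "cl (\<lambda>w. - f w) \<oplus>\<^bsub>AA\<^esub> cl f = \<zero>\<^bsub>AA\<^esub>" using cl_add[OF n f(1)] cl_zero by (simp add: A_zero)
    show "cl f \<in> carrier AA" using f by (auto simp: A_carrier)
    show "cl (\<lambda>w. - f w) \<in> carrier AA" using f n by (auto simp: A_carrier)
  qed
qed

lemma sum_carrier: "finite T \<Longrightarrow> (\<And>t. t \<in> T \<Longrightarrow> F t \<in> carrier (cohn_free E)) \<Longrightarrow>
    (\<lambda>w. \<Sum>t\<in>T. F t w) \<in> carrier (cohn_free E)"
proof (induction T rule: finite_induct)
  case empty then show ?case by (simp add: cf fa_carrier)
next
  case (insert a T)
  then show ?case using fa_add_closed[of "F a" "cohn_gens E" "\<lambda>w. \<Sum>t\<in>T. F t w"] by (simp add: cf)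
qed

lemma finsum_cl:
  assumes "finite T" "\<And>t. t \<in> T \<Longrightarrow> F t \<in> carrier (cohn_free E) \<and> F t [] = 0"
  shows "finsum AA (\<lambda>t. cl (F t)) T = cl (\<lambda>w. \<Sum>t\<in>T. F t w)"
  using assms
proof (induction T rule: finite_induct)
  case empty
  then show ?case using abelian_monoid.finsum_empty[OF abelian_group.axioms(1)[OF agA]] cl_zero A_zero by simp
next
  case (insert a T)
  have am: "abelian_monoid AA" by (rule abelian_group.axioms(1)[OF agA])
  have clc: "\<And>t. t \<in> insert a T \<Longrightarrow> cl (F t) \<in> carrier AA" using insert.prems by (auto simp: A_carrier)
  have "finsum AA (\<lambda>t. cl (F t)) (insert a T) = cl (F a) \<oplus>\<^bsub>AA\<^esub> finsum AA (\<lambda>t. cl (F t)) T"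
    using abelian_monoid.finsum_insert[OF am insert.hyps] clc by (auto simp: Pi_def)
  also have "\<dots> = cl (F a) \<oplus>\<^bsub>AA\<^esub> cl (\<lambda>w. \<Sum>t\<in>T. F t w)" using insert by simp
  also have "\<dots> = cl (\<lambda>w. F a w + (\<Sum>t\<in>T. F t w))"
    using cl_add insert.prems sum_carrier[OF insert.hyps(1), of F] by simp
  finally show ?case using insert.hyps by simp
qed

lemma RS_None: "RS None = {II}"
  by (simp add: cohn_component_def A_zero)

lemma RS_rep:
  assumes "x \<in> RS s"
  shows "\<exists>f. x = cl f \<and> f \<in> carrier (cohn_free E) \<and> f [] = 0 \<and> (\<forall>w. f w \<noteq> 0 \<longrightarrow> wt w = emb s)"
proof (cases s)
  case None
  then show ?thesis using assms cl_zero RS_None by (intro exI[of _ "\<lambda>w. 0"]) (simp add: cf fa_carrier)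
next
  case (Some \<sigma>)
  then obtain f where "x = cl f" "f \<in> Cs (Some \<sigma>)" using assms comp_Some by auto
  then show ?thesis using Some Cs_carrier Cs_nil Cs_wt by blast
qed

lemma RS_sub: "RS s \<subseteq> carrier AA"
  using RS_rep by (fastforce simp: A_carrier)

lemma in_RS_Some:
  assumes "f \<in> carrier (cohn_free E)" "\<forall>w. f w \<noteq> 0 \<longrightarrow> wt w = BEl \<sigma>"
  shows "cl f \<in> RS (Some \<sigma>)"
proof -
  obtain g where g: "g \<in> Cs (Some \<sigma>)" "(\<lambda>x. f x - g x) \<in> II" using class_in_comp[OF assms] by auto
  have "cl f = cl g" using cl_eq[OF assms(1) Cs_carrier[OF g(1)] g(2)] .
  then show ?thesis using g comp_Some by auto
qed

lemma semigroup_emb: "set w \<subseteq> cohn_gens E \<Longrightarrow> unemb (wt w) \<in> brandt_semigroup G I"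
  using good_wt[of w] by (cases "wt w") (auto simp: brandt_semigroup_def brandt_groupoid_def)

end


lemma emb_unemb: "x \<noteq> BOne \<Longrightarrow> emb (unemb x) = x"
  by (cases x) auto
lemma unemb_emb[simp]: "unemb (emb t) = t"
  by (cases t) auto

context cctxr begin

lemma am: "abelian_monoid AA" by (rule abelian_group.axioms(1)[OF agA])

lemma RS_rep2:
  assumes "x \<in> RS s"
  shows "\<exists>f. x = cl f \<and> f \<in> (if s = None then {\<lambda>w. 0} else Cs s) \<and> f \<in> carrier (cohn_free E) \<and> f [] = 0"
proof (cases s)
  case None
  then show ?thesis using assms RS_None cl_zero by (auto simp: cf fa_carrier)
next
  case (Some \<sigma>)
  have "x \<in> cl ` Cs s" using assms comp_Some Some by simp
  then obtain f where "x = cl f" "f \<in> Cs s" by blast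
  then show ?thesis using Some Cs_carrier Cs_nil by auto
qed

lemma RS_subgroup: "subgroup (RS s) (add_monoid AA)"
proof -
  interpret AG: abelian_group AA by (rule agA)
  have Cs0: "(\<lambda>w. 0) \<in> Cs s" for s by (rule Cs_zero)
  have rep: "\<And>x. x \<in> RS s \<Longrightarrow> \<exists>f. x = cl f \<and> f \<in> (if s = None then {\<lambda>w. 0} else Cs s) \<and> f \<in> carrier (cohn_free E) \<and> f [] = 0"
    by (rule RS_rep2)
  let ?C = "if s = None then {\<lambda>w. 0} else Cs s"
  have bk: "\<And>f. f \<in> ?C \<Longrightarrow> cl f \<in> RS s"
    using RS_None comp_Some[of "the s"] cl_zero by (cases s) auto
  have Cadd: "\<And>f g. f \<in> ?C \<Longrightarrow> g \<in> ?C \<Longrightarrow> (\<lambda>w. f w + g w) \<in> ?C"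
    using Cs_add by (cases s) auto
  have Cneg: "\<And>f. f \<in> ?C \<Longrightarrow> (\<lambda>w. - f w) \<in> ?C"
    using Cs_neg by (cases s) auto
  show ?thesis
  proof (rule AG.add.subgroupI)
    show "RS s \<subseteq> carrier AA" by (rule RS_sub)
    show "RS s \<noteq> {}" using bk[of "\<lambda>w. 0"] Cs_zero by (cases s) auto
  next
    fix x assume "x \<in> RS s"
    then obtain f where f: "x = cl f" "f \<in> ?C" "f \<in> carrier (cohn_free E)" "f [] = 0" using rep by blast
    show "\<ominus>\<^bsub>AA\<^esub> x \<in> RS s" using A_inv[OF f(3,4)] f bk Cneg by simp
  next
    fix x y assume "x \<in> RS s" "y \<in> RS s"
    then obtain f g where f: "x = cl f" "f \<in> ?C" "f \<in> carrier (cohn_free E)"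
      and g: "y = cl g" "g \<in> ?C" "g \<in> carrier (cohn_free E)" using rep by metis
    show "x \<oplus>\<^bsub>AA\<^esub> y \<in> RS s" using cl_add[OF f(3) g(3)] f g bk Cadd by simp
  qed
qed

lemma carrier_eq:
  "carrier AA = {finsum AA x T | x T. finite T \<and> T \<subseteq> brandt_semigroup G I \<and> (\<forall>s\<in>T. x s \<in> RS s)}"
proof
  show "{finsum AA x T | x T. finite T \<and> T \<subseteq> brandt_semigroup G I \<and> (\<forall>s\<in>T. x s \<in> RS s)} \<subseteq> carrier AA"
  proof
    fix X assume "X \<in> {finsum AA x T | x T. finite T \<and> T \<subseteq> brandt_semigroup G I \<and> (\<forall>s\<in>T. x s \<in> RS s)}"
    then obtain x T where X: "X = finsum AA x T" "\<forall>s\<in>T. x s \<in> RS s" by blast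
    have "x \<in> T \<rightarrow> carrier AA" using X(2) RS_sub by blast
    then show "X \<in> carrier AA" unfolding X(1) by (rule abelian_monoid.finsum_closed[OF am])
  qed
next
  show "carrier AA \<subseteq> {finsum AA x T | x T. finite T \<and> T \<subseteq> brandt_semigroup G I \<and> (\<forall>s\<in>T. x s \<in> RS s)}"
  proof
    fix X assume "X \<in> carrier AA"
    then obtain f where f: "X = cl f" "f \<in> carrier (cohn_free E)" "f [] = 0" by (auto simp: A_carrier)
    let ?S = "{w. f w \<noteq> 0}"
    have finS: "finite ?S" using f by (simp add: cf fa_carrier)
    have gS: "\<And>w. w \<in> ?S \<Longrightarrow> set w \<subseteq> cohn_gens E" using f by (simp add: cf fa_carrier)
    define T where "T = unemb ` wt ` ?S"
    define xx where "xx t = cl (proj {emb t} f)" for t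
    have finT: "finite T" using finS by (simp add: T_def)
    have Tsub: "T \<subseteq> brandt_semigroup G I"
    proof
      fix t assume "t \<in> T"
      then obtain w where "w \<in> ?S" "t = unemb (wt w)" unfolding T_def by blast
      then show "t \<in> brandt_semigroup G I" using semigroup_emb[OF gS] by blast
    qed
    have pc: "\<And>t. proj {emb t} f \<in> carrier (cohn_free E) \<and> proj {emb t} f [] = 0"
    proof
      fix t
      show "proj {emb t} f \<in> carrier (cohn_free E)" by (rule proj_carrier[OF f(2)])
      show "proj {emb t} f [] = 0" using f(3) by (simp add: proj_def)
    qed
    have xin: "xx t \<in> RS t" for t
    proof (cases t)
      case None
      have c0: "proj {BZero} f \<in> carrier (cohn_free E)" using pc[of None] by simp
      have "proj {BZero} f \<in> II" by (rule zero_in_I[OF c0]) (simp add: proj_def)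
      then show ?thesis using cl_in_I RS_None by (simp add: xx_def None)
    next
      case (Some \<sigma>)
      have c0: "proj {BEl \<sigma>} f \<in> carrier (cohn_free E)" using pc[of "Some \<sigma>"] by simp
      show ?thesis unfolding xx_def Some using in_RS_Some[OF c0] by (simp add: proj_def)
    qed
    have "finsum AA xx T = cl (\<lambda>w. \<Sum>t\<in>T. proj {emb t} f w)"
      unfolding xx_def by (rule finsum_cl[OF finT]) (use pc in auto)
    also have "(\<lambda>w. \<Sum>t\<in>T. proj {emb t} f w) = f"
    proof (rule ext)
      fix w
      show "(\<Sum>t\<in>T. proj {emb t} f w) = f w"
      proof (cases "f w = 0")
        case True then show ?thesis by (simp add: proj_def if_distrib cong: if_cong)
      next
        case False
        then have w: "w \<in> ?S" by simp
        have "w \<noteq> []" using False f(3) by auto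
        then have nb: "wt w \<noteq> BOne" using wt_nonempty_not_one gS[OF w] by simp
        have "(\<Sum>t\<in>T. proj {emb t} f w) = (\<Sum>t\<in>T. if t = unemb (wt w) then f w else 0)"
        proof (rule sum.cong[OF refl])
          fix t assume "t \<in> T"
          have "wt w = emb t \<longleftrightarrow> t = unemb (wt w)" using emb_unemb[OF nb] by auto
          then show "proj {emb t} f w = (if t = unemb (wt w) then f w else 0)" by (simp add: proj_def)
        qed
        also have "\<dots> = f w"
        proof -
          have "unemb (wt w) \<in> T" unfolding T_def using w by blast
          then show ?thesis using finT by (simp add: sum.delta)
        qed
        finally show ?thesis .
      qed
    qed
    finally have "X = finsum AA xx T" using f by simp
    then show "X \<in> {finsum AA x T | x T. finite T \<and> T \<subseteq> brandt_semigroup G I \<and> (\<forall>s\<in>T. x s \<in> RS s)}"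
      unfolding mem_Collect_eq using finT Tsub xin by (intro exI[of _ xx] exI[of _ T]) simp
  qed
qed

lemma indep:
  assumes T: "finite T" "T \<subseteq> brandt_semigroup G I" "\<forall>s\<in>T. x s \<in> RS s" "finsum AA x T = \<zero>\<^bsub>AA\<^esub>"
  shows "\<forall>s\<in>T. x s = \<zero>\<^bsub>AA\<^esub>"
proof -
  have "\<forall>s\<in>T. \<exists>f. x s = cl f \<and> f \<in> carrier (cohn_free E) \<and> f [] = 0 \<and> (\<forall>w. f w \<noteq> 0 \<longrightarrow> wt w = emb s)"
    using RS_rep T(3) by blast
  then obtain F where F: "\<And>s. s \<in> T \<Longrightarrow> x s = cl (F s) \<and> F s \<in> carrier (cohn_free E) \<and> F s [] = 0 \<and> (\<forall>w. F s w \<noteq> 0 \<longrightarrow> wt w = emb s)"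
    by metis
  have "finsum AA x T = finsum AA (\<lambda>s. cl (F s)) T"
    using F RS_sub by (intro abelian_monoid.finsum_cong'[OF am]) (auto simp: A_carrier)
  also have "\<dots> = cl (\<lambda>w. \<Sum>t\<in>T. F t w)" using F by (intro finsum_cl[OF T(1)]) auto
  finally have "cl (\<lambda>w. \<Sum>t\<in>T. F t w) = II" using T(4) A_zero by simp
  then have sI: "(\<lambda>w. \<Sum>t\<in>T. F t w) \<in> II" using cl_zero_iff sum_carrier[OF T(1), of F] F by auto
  show ?thesis
  proof
    fix s assume s: "s \<in> T"
    have "proj {emb s} (\<lambda>w. \<Sum>t\<in>T. F t w) = F s"
    proof (rule ext)
      fix w
      show "proj {emb s} (\<lambda>w. \<Sum>t\<in>T. F t w) w = F s w"
      proof (cases "wt w = emb s")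
        case True
        have "(\<Sum>t\<in>T. F t w) = (\<Sum>t\<in>T. if t = s then F s w else 0)"
        proof (rule sum.cong[OF refl])
          fix t assume t: "t \<in> T"
          show "F t w = (if t = s then F s w else 0)"
          proof (cases "t = s")
            case False
            have "F t w = 0"
            proof (rule ccontr)
              assume "F t w \<noteq> 0"
              then have "wt w = emb t" using F[OF t] by blast
              then show False using True False emb_inj by metis
            qed
            then show ?thesis using False by simp
          qed simp
        qed
        also have "\<dots> = F s w" using s T(1) by simp
        finally show ?thesis using True by (simp add: proj_def)
      next
        case False
        then have "F s w = 0" using F[OF s] by blast
        then show ?thesis using False by (simp add: proj_def)
      qed
    qed
    then have "F s \<in> II" using graded_ideal[OF sI, of "{emb s}"] by simp
    then show "x s = \<zero>\<^bsub>AA\<^esub>" using F[OF s] cl_in_I A_zero by simp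
  qed
qed

lemma prod_wt:
  assumes f: "f \<in> carrier (cohn_free E)" "\<forall>w. f w \<noteq> 0 \<longrightarrow> wt w = emb s"
    and g: "g \<in> carrier (cohn_free E)" "\<forall>w. g w \<noteq> 0 \<longrightarrow> wt w = emb t"
  shows "\<forall>w. (f \<otimes>\<^bsub>cohn_free E\<^esub> g) w \<noteq> 0 \<longrightarrow> wt w = emb (brandt_mult G s t)"
proof (intro allI impI)
  fix w assume "(f \<otimes>\<^bsub>cohn_free E\<^esub> g) w \<noteq> 0"
  then obtain i where "f (take i w) * g (drop i w) \<noteq> 0" using sum_nonzero_ex by (force simp: cf fa_mult)
  then have "f (take i w) \<noteq> 0" "g (drop i w) \<noteq> 0" by auto
  then have "wt (take i w) = emb s" "wt (drop i w) = emb t" using f g by auto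
  then have "wt (take i w @ drop i w) = emb (brandt_mult G s t)" unfolding wt_append emb_mult by simp
  then show "wt w = emb (brandt_mult G s t)" by simp
qed

lemma prod_rule:
  assumes x: "x \<in> RS s" and y: "y \<in> RS t"
  shows "(brandt_mult G s t \<noteq> None \<longrightarrow> x \<otimes>\<^bsub>AA\<^esub> y \<in> RS (brandt_mult G s t))
       \<and> (brandt_mult G s t = None \<longrightarrow> x \<otimes>\<^bsub>AA\<^esub> y = \<zero>\<^bsub>AA\<^esub>)"
proof -
  obtain f where f: "x = cl f" "f \<in> carrier (cohn_free E)" "\<forall>w. f w \<noteq> 0 \<longrightarrow> wt w = emb s"
    using RS_rep[OF x] by blast
  obtain g where g: "y = cl g" "g \<in> carrier (cohn_free E)" "\<forall>w. g w \<noteq> 0 \<longrightarrow> wt w = emb t"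
    using RS_rep[OF y] by blast
  have xy: "x \<otimes>\<^bsub>AA\<^esub> y = cl (f \<otimes>\<^bsub>cohn_free E\<^esub> g)" using cl_mult f g by simp
  have fg: "f \<otimes>\<^bsub>cohn_free E\<^esub> g \<in> carrier (cohn_free E)"
    using ring.ring_simprules(5)[OF ring_F] f g by blast
  have wfg: "\<forall>w. (f \<otimes>\<^bsub>cohn_free E\<^esub> g) w \<noteq> 0 \<longrightarrow> wt w = emb (brandt_mult G s t)"
    by (rule prod_wt[OF f(2,3) g(2,3)])
  show ?thesis
  proof (cases "brandt_mult G s t")
    case None
    have "f \<otimes>\<^bsub>cohn_free E\<^esub> g \<in> II" using zero_in_I[OF fg] wfg None by simp
    then show ?thesis using xy cl_in_I A_zero None by simp
  next
    case (Some \<sigma>)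
    then show ?thesis using xy in_RS_Some[OF fg] wfg by simp
  qed
qed

theorem graded: "brandt_graded_ring AA G I RS"
  unfolding brandt_graded_ring_def
proof (intro conjI ballI allI impI)
  show "RS None = {\<zero>\<^bsub>AA\<^esub>}" using RS_None A_zero by simp
  show "carrier AA = {finsum AA x T | x T. finite T \<and> T \<subseteq> brandt_semigroup G I \<and> (\<forall>s\<in>T. x s \<in> RS s)}"
    by (rule carrier_eq)
next
  fix s assume "s \<in> brandt_semigroup G I"
  show "subgroup (RS s) (add_monoid AA)" by (rule RS_subgroup)
next
  fix x T s assume "finite T \<and> T \<subseteq> brandt_semigroup G I \<and> (\<forall>s\<in>T. x s \<in> RS s) \<and> finsum AA x T = \<zero>\<^bsub>AA\<^esub>" "s \<in> T"
  then show "x s = \<zero>\<^bsub>AA\<^esub>" using indep by blast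
next
  fix s t x y assume "brandt_mult G s t \<noteq> None" "x \<in> RS s" "y \<in> RS t"
  then show "x \<otimes>\<^bsub>AA\<^esub> y \<in> RS (brandt_mult G s t)" using prod_rule by blast
next
  fix s t x y assume "brandt_mult G s t = None" "x \<in> RS s" "y \<in> RS t"
  then show "x \<otimes>\<^bsub>AA\<^esub> y = \<zero>\<^bsub>AA\<^esub>" using prod_rule by blast
qed

end


context cctxr begin

lemma fstar_II: "fstar ` II = II"
proof
  show "fstar ` II \<subseteq> II" using star_ideal by auto
  show "II \<subseteq> fstar ` II"
  proof
    fix h assume "h \<in> II"
    then have "fstar h \<in> II" by (rule star_ideal)
    then show "h \<in> fstar ` II" by (metis fstar_fstar image_eqI)
  qed
qed

lemma fstar_add: "fstar (\<lambda>w. h w + f w) = (\<lambda>w. fstar h w + fstar f w)"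
  by (simp add: fstar_def)

lemma cl_repr: "cl f = (\<lambda>h. (\<lambda>w. h w + f w)) ` II"
  by (auto simp: cohn_class_def a_r_coset_def' cf fa_add)

lemma star_cl: "fstar ` cl f = cl (fstar f)"
proof -
  have "fstar ` cl f = (\<lambda>h. fstar (\<lambda>w. h w + f w)) ` II" by (simp add: cl_repr image_image)
  also have "\<dots> = (\<lambda>h. (\<lambda>w. h w + fstar f w)) ` (fstar ` II)" by (simp add: image_image fstar_add)
  also have "\<dots> = cl (fstar f)" by (simp add: fstar_II cl_repr)
  finally show ?thesis .
qed

lemma binv_binv: "s \<in> brandt_semigroup G I \<Longrightarrow> brandt_inv G (brandt_inv G s) = s"
  using grp by (auto simp: brandt_semigroup_def brandt_groupoid_def)

lemma fstar_Cs: "s \<in> brandt_semigroup G I \<Longrightarrow> fstar ` Cs s = Cs (brandt_inv G s)"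
proof
  show "fstar ` Cs s \<subseteq> Cs (brandt_inv G s)" using Cs_star by auto
  assume s: "s \<in> brandt_semigroup G I"
  show "Cs (brandt_inv G s) \<subseteq> fstar ` Cs s"
  proof
    fix g assume "g \<in> Cs (brandt_inv G s)"
    then have "fstar g \<in> Cs s" using Cs_star binv_binv[OF s] by metis
    then show "g \<in> fstar ` Cs s" by (metis fstar_fstar image_eqI)
  qed
qed

theorem involution: "anti_graded_involution AA G I RS (\<lambda>Y. fstar ` Y)"
  unfolding anti_graded_involution_def
proof (intro conjI ballI)
  show "(\<lambda>Y. fstar ` Y) \<in> carrier AA \<rightarrow> carrier AA"
  proof
    fix Y assume "Y \<in> carrier AA"
    then obtain f where f: "Y = cl f" "f \<in> carrier (cohn_free E)" "f [] = 0" by (auto simp: A_carrier)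
    have "fstar f \<in> carrier (cohn_free E)" "fstar f [] = 0" using fstar_carrier[OF f(2)] f(3) by (auto simp: fstar_def)
    then show "fstar ` Y \<in> carrier AA" using star_cl f(1) by (auto simp: A_carrier)
  qed
next
  fix Y show "fstar ` fstar ` Y = Y" by (simp add: image_image)
next
  fix s assume s: "s \<in> brandt_semigroup G I"
  show "(\<lambda>Y. fstar ` Y) ` RS s = RS (brandt_inv G s)"
  proof (cases s)
    case None
    then show ?thesis using RS_None fstar_II by simp
  next
    case (Some \<sigma>)
    obtain \<tau> where t: "brandt_inv G s = Some \<tau>" using Some by (cases \<sigma>) auto
    have "(\<lambda>Y. fstar ` Y) ` RS s = (\<lambda>f. cl (fstar f)) ` Cs s"
      using comp_Some Some by (simp add: image_image star_cl)
    also have "\<dots> = cl ` (fstar ` Cs s)" by (simp add: image_image)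
    also have "\<dots> = cl ` Cs (brandt_inv G s)" using fstar_Cs[OF s] by simp
    also have "\<dots> = RS (brandt_inv G s)" using comp_Some t by simp
    finally show ?thesis .
  qed
qed

theorem main: "brandt_graded_ring AA G I RS \<and> (\<exists>star. anti_graded_involution AA G I RS star)"
  using graded involution by blast

end

lemma main_X:
  assumes "wf_digraph E" "X \<subseteq> verts E" "group G" "weight_mapping E G I wv we"
  shows "brandt_graded_ring (cohn_path_algebra E X :: (('v, 'e) cohn_gen list \<Rightarrow> 'r::ring_1) set ring) G I (cohn_component E X G wv we)
     \<and> (\<exists>star. anti_graded_involution (cohn_path_algebra E X :: (('v, 'e) cohn_gen list \<Rightarrow> 'r::ring_1) set ring) G I
                      (cohn_component E X G wv we) star)"
proof -
  interpret C: cctxr E X G I wv we "TYPE('r)"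
    using assms by (simp add: cctxr_def cctx_def)
  show ?thesis by (rule C.main)
qed

theorem proposition3p5:
  fixes E :: "('v, 'e) pre_digraph"
    and X :: "'v set"
    and G :: "('a, 'b) monoid_scheme"
    and I :: "'i set"
    and wv :: "'v \<Rightarrow> 'i \<times> 'a \<times> 'i"
    and we :: "'e \<Rightarrow> 'i \<times> 'a \<times> 'i"
  assumes "wf_digraph E"
    and "X \<subseteq> regular_vertices E"
    and "group G"
    and "weight_mapping E G I wv we"
  shows "brandt_graded_ring (cohn_path_algebra E X :: (('v, 'e) cohn_gen list \<Rightarrow> 'r::ring_1) set ring) G I (cohn_component E X G wv we)
         \<and> (\<exists>star. anti_graded_involution (cohn_path_algebra E X :: (('v, 'e) cohn_gen list \<Rightarrow> 'r::ring_1) set ring) G I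
                      (cohn_component E X G wv we) star)
         \<and> brandt_graded_ring (leavitt_path_algebra E :: (('v, 'e) cohn_gen list \<Rightarrow> 'r::ring_1) set ring) G I
             (cohn_component E (regular_vertices E) G wv we)
         \<and> (\<exists>star. anti_graded_involution (leavitt_path_algebra E :: (('v, 'e) cohn_gen list \<Rightarrow> 'r::ring_1) set ring) G I
                      (cohn_component E (regular_vertices E) G wv we) star)"
proof -
  have rv: "regular_vertices E \<subseteq> verts E" by (auto simp: regular_vertices_def)
  have a: "brandt_graded_ring (cohn_path_algebra E X :: (('v, 'e) cohn_gen list \<Rightarrow> 'r::ring_1) set ring) G I (cohn_component E X G wv we)
         \<and> (\<exists>star. anti_graded_involution (cohn_path_algebra E X :: (('v, 'e) cohn_gen list \<Rightarrow> 'r::ring_1) set ring) G I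
                      (cohn_component E X G wv we) star)"
    using main_X[OF assms(1) _ assms(3,4)] assms(2) rv by blast
  have b: "brandt_graded_ring (cohn_path_algebra E (regular_vertices E) :: (('v, 'e) cohn_gen list \<Rightarrow> 'r::ring_1) set ring) G I (cohn_component E (regular_vertices E) G wv we)
         \<and> (\<exists>star. anti_graded_involution (cohn_path_algebra E (regular_vertices E) :: (('v, 'e) cohn_gen list \<Rightarrow> 'r::ring_1) set ring) G I
                      (cohn_component E (regular_vertices E) G wv we) star)"
    using main_X[OF assms(1) rv assms(3,4)] by blast
  show ?thesis using a b by (simp add: leavitt_path_algebra_def)
qed


end
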